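(* For a Tychonoff space $X$, the following conditions are equivalent: (1) $C_p(X)$ is distinguished. (2) Every countable partition of $X$ admits a point-finite open expansion in $X$. (3) Every countable collection of pairwise disjoint subsets of $X$ admits a point-finite open expansion in $X$. (4) $X$ is a $\Delta$-space.
   Context: $C_p(X)$ denotes the vector space of all continuous real-valued functions on $X$ with the topology of pointwise convergence. A locally convex space $E$ is distinguished if its strong dual (the topological dual of $E$ with the topology of uniform convergence on bounded subsets of $E$) is barrelled. A partition of $X$ is a cover of $X$ by pairwise disjoint sets. A collection $\{U_\gamma:\gamma\in\Gamma\}$ is an expansion of a collection $\{X_\gamma:\gamma\in\Gamma\}$ in $X$ if $X_\gamma\subseteq U_\gamma\subseteq X$ for every $\gamma$; it is an open expansion if all $U_\gamma$ are open in $X$; it is point-finite if no point of $X$ belongs to infinitely many $U_\gamma$. A topological space $X$ is a $\Delta$-space if for every decreasing sequence $\{D_n:n\in\omega\}$ of subsets of $X$ with $\bigcap_n D_n=\emptyset$ there is a decreasing sequence $\{V_n:n\in\omega\}$ of open subsets of $X$ with $D_n\subseteq V_n$ for all $n$ and $\bigcap_n V_n=\emptyset$. All spaces are Tychonoff and infinite. *)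

theory Defs
  imports "HOL-Analysis.Analysis"
begin

text \<open>Real vector spaces are represented as linear subspaces V of a function space
  'b \<Rightarrow> real with pointwise operations, equipped with a topology T (topspace T = V).\<close>

definition zero_fun :: "'b \<Rightarrow> real" where
  "zero_fun = (\<lambda>x. 0)"

definition fscale :: "real \<Rightarrow> ('b \<Rightarrow> real) \<Rightarrow> ('b \<Rightarrow> real)" where
  "fscale c f = (\<lambda>x. c * f x)"

definition tvs_bounded :: "('b \<Rightarrow> real) topology \<Rightarrow> ('b \<Rightarrow> real) set \<Rightarrow> bool" where
  "tvs_bounded T B \<longleftrightarrow> B \<subseteq> topspace T \<and>
     (\<forall>U. openin T U \<and> zero_fun \<in> U \<longrightarrow> (\<exists>t>0. B \<subseteq> fscale t ` U))"

definition tvs_dual :: "('b \<Rightarrow> real) topology \<Rightarrow> (('b \<Rightarrow> real) \<Rightarrow> real) set" where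
  "tvs_dual T = {\<phi>. continuous_map T euclideanreal \<phi>
      \<and> (\<forall>f\<in>topspace T. \<forall>g\<in>topspace T. \<phi> (\<lambda>x. f x + g x) = \<phi> f + \<phi> g)
      \<and> (\<forall>f\<in>topspace T. \<forall>c. \<phi> (fscale c f) = c * \<phi> f)
      \<and> (\<forall>f. f \<notin> topspace T \<longrightarrow> \<phi> f = 0)}"

definition strong_dual_topology :: "('b \<Rightarrow> real) topology \<Rightarrow> (('b \<Rightarrow> real) \<Rightarrow> real) topology" where
  "strong_dual_topology T = topology_generated_by
     ({{\<psi> \<in> tvs_dual T. (SUP f\<in>B. \<bar>\<psi> f - \<phi> f\<bar>) < \<epsilon>} | \<phi> B \<epsilon>.
        \<phi> \<in> tvs_dual T \<and> tvs_bounded T B \<and> B \<noteq> {} \<and> \<epsilon> > 0}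
     \<union> {tvs_dual T})"

definition barrel :: "('b \<Rightarrow> real) topology \<Rightarrow> ('b \<Rightarrow> real) set \<Rightarrow> bool" where
  "barrel S A \<longleftrightarrow> A \<subseteq> topspace S \<and> closedin S A
     \<and> (\<forall>f\<in>A. \<forall>g\<in>A. \<forall>t. 0 \<le> t \<and> t \<le> 1 \<longrightarrow> (\<lambda>x. t * f x + (1 - t) * g x) \<in> A)
     \<and> (\<forall>f\<in>A. \<forall>c. \<bar>c\<bar> \<le> 1 \<longrightarrow> fscale c f \<in> A)
     \<and> (\<forall>f\<in>topspace S. \<exists>r>0. \<forall>c. \<bar>c\<bar> \<ge> r \<longrightarrow> f \<in> fscale c ` A)"

definition barrelled :: "('b \<Rightarrow> real) topology \<Rightarrow> bool" where
  "barrelled S \<longleftrightarrow> (\<forall>A. barrel S A \<longrightarrow> (\<exists>U. openin S U \<and> zero_fun \<in> U \<and> U \<subseteq> A))"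

definition distinguished :: "('b \<Rightarrow> real) topology \<Rightarrow> bool" where
  "distinguished T \<longleftrightarrow> barrelled (strong_dual_topology T)"

definition Cp_set :: "'a topology \<Rightarrow> ('a \<Rightarrow> real) set" where
  "Cp_set X = {f. continuous_map X euclideanreal f \<and> (\<forall>x. x \<notin> topspace X \<longrightarrow> f x = 0)}"

definition Cp :: "'a topology \<Rightarrow> ('a \<Rightarrow> real) topology" where
  "Cp X = subtopology (product_topology (\<lambda>_. euclideanreal) UNIV) (Cp_set X)"

definition tychonoff_space :: "'a topology \<Rightarrow> bool" where
  "tychonoff_space X \<longleftrightarrow> Hausdorff_space X \<and> completely_regular_space X"

definition point_finite_open_expansion :: "'a topology \<Rightarrow> 'a set set \<Rightarrow> bool" where
  "point_finite_open_expansion X \<P> \<longleftrightarrow> (\<exists>U. (\<forall>P\<in>\<P>. openin X (U P) \<and> P \<subseteq> U P)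
       \<and> (\<forall>x\<in>topspace X. finite {P\<in>\<P>. x \<in> U P}))"

definition Delta_space :: "'a topology \<Rightarrow> bool" where
  "Delta_space X \<longleftrightarrow> (\<forall>D :: nat \<Rightarrow> 'a set. (\<forall>n. D n \<subseteq> topspace X) \<and> decseq D \<and> (\<Inter>n. D n) = {}
      \<longrightarrow> (\<exists>V :: nat \<Rightarrow> 'a set. (\<forall>n. openin X (V n)) \<and> decseq V \<and> (\<forall>n. D n \<subseteq> V n)
             \<and> (\<Inter>n. V n) = {}))"

end

theory Submission
  imports Defs
begin


lemma P23:
  fixes X :: "'a topology"
  assumes H: "\<forall>\<P>. countable \<P> \<and> disjoint \<P> \<and> \<Union>\<P> = topspace X \<longrightarrow> point_finite_open_expansion X \<P>"
  shows "\<forall>\<P>. countable \<P> \<and> disjoint \<P> \<and> \<Union>\<P> \<subseteq> topspace X \<longrightarrow> point_finite_open_expansion X \<P>"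
proof (intro allI impI)
  fix \<P> :: "'a set set" assume a: "countable \<P> \<and> disjoint \<P> \<and> \<Union>\<P> \<subseteq> topspace X"
  define R where "R = topspace X - \<Union>\<P>"
  have "countable (insert R \<P>)" using a by simp
  moreover have "disjoint (insert R \<P>)"
    using a unfolding R_def by (auto simp: pairwise_insert disjnt_def)
  moreover have "\<Union>(insert R \<P>) = topspace X" using a unfolding R_def by auto
  ultimately have "point_finite_open_expansion X (insert R \<P>)" using H by blast
  then obtain U where U: "\<forall>P\<in>insert R \<P>. openin X (U P) \<and> P \<subseteq> U P"
     "\<forall>x\<in>topspace X. finite {P\<in>insert R \<P>. x \<in> U P}"
    unfolding point_finite_open_expansion_def by blast
  show "point_finite_open_expansion X \<P>"
    unfolding point_finite_open_expansion_def
  proof (intro exI[of _ U] conjI ballI)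
    fix x assume "x \<in> topspace X"
    then show "finite {P\<in>\<P>. x \<in> U P}"
      by (rule finite_subset[rotated, OF U(2)[rule_format]]) auto
  qed (use U in auto)
qed

lemma P34:
  fixes X :: "'a topology"
  assumes H: "\<forall>\<P>. countable \<P> \<and> disjoint \<P> \<and> \<Union>\<P> \<subseteq> topspace X \<longrightarrow> point_finite_open_expansion X \<P>"
  shows "Delta_space X"
  unfolding Delta_space_def
proof (intro allI impI)
  fix D :: "nat \<Rightarrow> 'a set"
  assume a: "(\<forall>n. D n \<subseteq> topspace X) \<and> decseq D \<and> (\<Inter>n. D n) = {}"
  define Q where "Q n = D n - D (Suc n)" for n
  have disjQ: "Q n \<inter> Q m = {}" if "n \<noteq> m" for n m
  proof -
    have *: "Q n \<inter> Q m = {}" if "n < m" for n m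
    proof -
      have "D m \<subseteq> D (Suc n)" using a that by (simp add: decseq_def)
      then show ?thesis unfolding Q_def by auto
    qed
    show ?thesis using *[of n m] *[of m n] that by (cases "n < m") auto
  qed
  have "countable (range Q)" by simp
  moreover have "disjoint (range Q)"
    unfolding pairwise_def disjnt_def
  proof clarsimp
    fix n m assume "Q n \<noteq> Q m" then have "n \<noteq> m" by auto
    then show "Q n \<inter> Q m = {}" by (rule disjQ)
  qed
  moreover have "\<Union>(range Q) \<subseteq> topspace X" using a unfolding Q_def by auto
  ultimately have "point_finite_open_expansion X (range Q)" using H by blast
  then obtain U where U: "\<forall>P\<in>range Q. openin X (U P) \<and> P \<subseteq> U P"
     "\<forall>x\<in>topspace X. finite {P\<in>range Q. x \<in> U P}"
    unfolding point_finite_open_expansion_def by blast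
  define V where "V n = \<Union>{U (Q k) | k. n \<le> k \<and> Q k \<noteq> {}}" for n
  show "\<exists>V. (\<forall>n. openin X (V n)) \<and> decseq V \<and> (\<forall>n. D n \<subseteq> V n) \<and> \<Inter> (range V) = {}"
  proof (intro exI[of _ V] conjI allI)
    fix n show "openin X (V n)" unfolding V_def by (rule openin_Union) (use U(1) in blast)
  next
    show "decseq V" unfolding decseq_def
    proof (intro allI impI)
      fix m n :: nat assume "m \<le> n"
      then have "{U (Q k) |k. n \<le> k \<and> Q k \<noteq> {}} \<subseteq> {U (Q k) |k. m \<le> k \<and> Q k \<noteq> {}}" by auto
      then show "V n \<le> V m" unfolding V_def by (rule Union_mono)
    qed
  next
    fix n show "D n \<subseteq> V n"
    proof
      fix x assume x: "x \<in> D n"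
      have "\<exists>m. x \<notin> D m" using a by auto
      define m where "m = (LEAST m. x \<notin> D m)"
      have xm: "x \<notin> D m" unfolding m_def by (rule LeastI_ex) fact
      have lt: "x \<in> D j" if "j < m" for j
        using not_less_Least[of j "\<lambda>m. x \<notin> D m"] that unfolding m_def by blast
      have "n < m"
      proof (rule ccontr)
        assume "\<not> n < m" then have "m \<le> n" by simp
        then have "D n \<subseteq> D m" using a by (simp add: decseq_def)
        then show False using x xm by auto
      qed
      then obtain k where k: "m = Suc k" by (cases m) auto
      have "x \<in> Q k" unfolding Q_def using lt[of k] xm k by auto
      moreover have "n \<le> k" using \<open>n < m\<close> k by simp
      ultimately show "x \<in> V n" unfolding V_def using U(1) by blast
    qed
  next
    show "\<Inter> (range V) = {}"
    proof (rule ccontr)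
      assume "\<Inter> (range V) \<noteq> {}"
      then obtain x where x: "\<And>n. x \<in> V n" by auto
      have xX: "x \<in> topspace X"
        using x[of 0] U(1) openin_subset unfolding V_def by fastforce
      define K where "K = {k. Q k \<noteq> {} \<and> x \<in> U (Q k)}"
      have injQ: "inj_on Q K"
      proof (rule inj_onI)
        fix a b assume ab: "a \<in> K" "b \<in> K" "Q a = Q b"
        show "a = b"
        proof (rule ccontr)
          assume "a \<noteq> b" then have "Q a \<inter> Q b = {}" by (rule disjQ)
          then show False using ab unfolding K_def by auto
        qed
      qed
      have "Q ` K \<subseteq> {P\<in>range Q. x \<in> U P}" unfolding K_def by auto
      then have "finite (Q ` K)" using U(2) xX finite_subset by blast
      then have fK: "finite K" using injQ finite_imageD by blast
      have ex: "\<exists>k\<in>K. n \<le> k" for n using x[of n] unfolding V_def K_def by auto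
      obtain b where "\<forall>k\<in>K. k \<le> b" using fK finite_nat_set_iff_bounded_le by blast
      then show False using ex[of "Suc b"] by auto
    qed
  qed
qed

lemma P43:
  fixes X :: "'a topology"
  assumes H: "Delta_space X"
  shows "\<forall>\<P>. countable \<P> \<and> disjoint \<P> \<and> \<Union>\<P> \<subseteq> topspace X \<longrightarrow> point_finite_open_expansion X \<P>"
proof (intro allI impI)
  fix \<P> :: "'a set set" assume a: "countable \<P> \<and> disjoint \<P> \<and> \<Union>\<P> \<subseteq> topspace X"
  define \<P>' where "\<P>' = \<P> - {{}}"
  have "countable \<P>'" using a unfolding \<P>'_def by simp
  then obtain g :: "'a set \<Rightarrow> nat" where g: "inj_on g \<P>'" unfolding countable_def by blast
  define D where "D n = \<Union>{P\<in>\<P>'. n \<le> g P}" for n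
  have "\<exists>V :: nat \<Rightarrow> 'a set. (\<forall>n. openin X (V n)) \<and> decseq V \<and> (\<forall>n. D n \<subseteq> V n)
             \<and> (\<Inter>n. V n) = {}"
  proof (rule H[unfolded Delta_space_def, rule_format], intro conjI allI)
    fix n show "D n \<subseteq> topspace X" using a unfolding D_def \<P>'_def by auto
  next
    show "decseq D" unfolding decseq_def D_def by auto
  next
    show "(\<Inter>n. D n) = {}"
    proof (rule ccontr)
      assume "(\<Inter>n. D n) \<noteq> {}"
      then obtain x where x: "\<And>n. x \<in> D n" by auto
      then obtain P where P: "P \<in> \<P>'" "x \<in> P" unfolding D_def by blast
      from x[of "Suc (g P)"] obtain P' where P': "P' \<in> \<P>'" "x \<in> P'" "Suc (g P) \<le> g P'"
        unfolding D_def by blast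
      then have "P \<noteq> P'" by auto
      then show False using a P P' unfolding \<P>'_def pairwise_def disjnt_def by blast
    qed
  qed
  then obtain V where V: "\<forall>n. openin X (V n)" "decseq V" "\<forall>n. D n \<subseteq> V n" "(\<Inter>n. V n) = {}"
    by blast
  define U where "U P = (if P = {} then {} else V (g P))" for P
  show "point_finite_open_expansion X \<P>"
    unfolding point_finite_open_expansion_def
  proof (intro exI[of _ U] conjI ballI)
    fix P assume P: "P \<in> \<P>"
    show "openin X (U P)" unfolding U_def using V by auto
    show "P \<subseteq> U P"
    proof (cases "P = {}")
      case False
      then have "P \<subseteq> D (g P)" unfolding D_def \<P>'_def using P by auto
      then show ?thesis using V False unfolding U_def by auto
    qed (simp add: U_def)
  next
    fix x assume x: "x \<in> topspace X"
    obtain m where m: "x \<notin> V m" using V(4) by auto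
    have "{P\<in>\<P>. x \<in> U P} \<subseteq> {P\<in>\<P>'. g P < m}"
    proof
      fix P assume "P \<in> {P\<in>\<P>. x \<in> U P}"
      then have P: "P \<in> \<P>" "x \<in> U P" by auto
      then have ne: "P \<noteq> {}" unfolding U_def by auto
      have "g P < m"
      proof (rule ccontr)
        assume "\<not> g P < m"
        then have "V (g P) \<subseteq> V m" using V(2) by (simp add: decseq_def)
        then show False using P ne m unfolding U_def by auto
      qed
      then show "P \<in> {P\<in>\<P>'. g P < m}" using P ne unfolding \<P>'_def by auto
    qed
    moreover have "finite {P\<in>\<P>'. g P < m}"
    proof -
      have "g ` {P\<in>\<P>'. g P < m} \<subseteq> {..<m}" by auto
      then have "finite (g ` {P\<in>\<P>'. g P < m})" using finite_subset by blast
      moreover have "inj_on g {P\<in>\<P>'. g P < m}" using g inj_on_subset by fastforce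
      ultimately show ?thesis using finite_imageD by blast
    qed
    ultimately show "finite {P\<in>\<P>. x \<in> U P}" using finite_subset by blast
  qed
qed



lemma topspace_Cp [simp]: "topspace (Cp X) = Cp_set X"
  unfolding Cp_def by simp

lemma Cp_setD: "f \<in> Cp_set X \<Longrightarrow> continuous_map X euclideanreal f"
  "f \<in> Cp_set X \<Longrightarrow> x \<notin> topspace X \<Longrightarrow> f x = 0"
  unfolding Cp_set_def by auto

lemma Cp_set_add: "f \<in> Cp_set X \<Longrightarrow> g \<in> Cp_set X \<Longrightarrow> (\<lambda>x. f x + g x) \<in> Cp_set X"
  unfolding Cp_set_def by (auto intro: continuous_map_add)

lemma Cp_set_scale: "f \<in> Cp_set X \<Longrightarrow> fscale c f \<in> Cp_set X"
  unfolding Cp_set_def fscale_def by (auto intro: continuous_map_real_mult_left)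

lemma Cp_set_scale': "f \<in> Cp_set X \<Longrightarrow> (\<lambda>x. c * f x) \<in> Cp_set X"
  using Cp_set_scale unfolding fscale_def by blast

lemma Cp_set_zero: "zero_fun \<in> Cp_set X"
  unfolding Cp_set_def zero_fun_def by auto

lemma Cp_set_lin: "f \<in> Cp_set X \<Longrightarrow> g \<in> Cp_set X \<Longrightarrow> (\<lambda>x. a * f x + b * g x) \<in> Cp_set X"
  using Cp_set_add[OF Cp_set_scale Cp_set_scale, of f X g a b] unfolding fscale_def by simp

lemma Cp_set_sum: "finite I \<Longrightarrow> (\<And>i. i \<in> I \<Longrightarrow> h i \<in> Cp_set X) \<Longrightarrow> (\<lambda>x. \<Sum>i\<in>I. c i * h i x) \<in> Cp_set X"
proof (induction I rule: finite_induct)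
  case empty then show ?case using Cp_set_zero unfolding zero_fun_def by simp
next
  case (insert i I)
  have "(\<lambda>x. 1 * (c i * h i x) + 1 * (\<Sum>i\<in>I. c i * h i x)) \<in> Cp_set X"
    using Cp_set_lin[OF Cp_set_scale[of "h i" X "c i"] insert.IH, of 1 1] insert.prems
    unfolding fscale_def by simp
  then show ?case using insert.hyps by simp
qed

lemma eval_cont: "continuous_map (Cp X) euclideanreal (\<lambda>f. f x)"
  unfolding Cp_def
  by (rule continuous_map_from_subtopology) (rule continuous_map_product_projection, simp)

definition delta :: "'a topology \<Rightarrow> 'a \<Rightarrow> ('a \<Rightarrow> real) \<Rightarrow> real" where
  "delta X x = (\<lambda>f. if f \<in> Cp_set X then f x else 0)"

lemma dual_def_iff: "\<phi> \<in> tvs_dual T \<longleftrightarrow> continuous_map T euclideanreal \<phi>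
      \<and> (\<forall>f\<in>topspace T. \<forall>g\<in>topspace T. \<phi> (\<lambda>x. f x + g x) = \<phi> f + \<phi> g)
      \<and> (\<forall>f\<in>topspace T. \<forall>c. \<phi> (fscale c f) = c * \<phi> f)
      \<and> (\<forall>f. f \<notin> topspace T \<longrightarrow> \<phi> f = 0)"
  unfolding tvs_dual_def by simp

lemma delta_dual: "delta X x \<in> tvs_dual (Cp X)"
  unfolding dual_def_iff topspace_Cp
proof (intro conjI ballI allI impI)
  show "continuous_map (Cp X) euclideanreal (delta X x)"
    by (rule continuous_map_eq[OF eval_cont]) (simp add: delta_def)
qed (auto simp: delta_def Cp_set_add Cp_set_scale' fscale_def)

lemma dual_lin:
  assumes "\<phi> \<in> tvs_dual (Cp X)" "\<psi> \<in> tvs_dual (Cp X)"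
  shows "(\<lambda>f. a * \<phi> f + b * \<psi> f) \<in> tvs_dual (Cp X)"
  using assms unfolding dual_def_iff topspace_Cp
  by (auto intro!: continuous_map_add continuous_map_real_mult_left simp: algebra_simps)

lemma zero_dual: "zero_fun \<in> tvs_dual (Cp X)"
  unfolding dual_def_iff topspace_Cp zero_fun_def by auto

lemma dual_add: "\<phi> \<in> tvs_dual (Cp X) \<Longrightarrow> f \<in> Cp_set X \<Longrightarrow> g \<in> Cp_set X \<Longrightarrow> \<phi> (\<lambda>x. f x + g x) = \<phi> f + \<phi> g"
  and dual_scale: "\<phi> \<in> tvs_dual (Cp X) \<Longrightarrow> f \<in> Cp_set X \<Longrightarrow> \<phi> (fscale c f) = c * \<phi> f"
  and dual_out: "\<phi> \<in> tvs_dual (Cp X) \<Longrightarrow> f \<notin> Cp_set X \<Longrightarrow> \<phi> f = 0"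
  and dual_cont: "\<phi> \<in> tvs_dual (Cp X) \<Longrightarrow> continuous_map (Cp X) euclideanreal \<phi>"
  unfolding dual_def_iff topspace_Cp by auto

lemma dual_lin_app: "\<phi> \<in> tvs_dual (Cp X) \<Longrightarrow> f \<in> Cp_set X \<Longrightarrow> g \<in> Cp_set X \<Longrightarrow>
   \<phi> (\<lambda>x. a * f x + b * g x) = a * \<phi> f + b * \<phi> g"
  using dual_add[OF _ Cp_set_scale Cp_set_scale, of \<phi> X f g a b] dual_scale[of \<phi> X f a] dual_scale[of \<phi> X g b]
  unfolding fscale_def by simp

lemma dual_zero_app: "\<phi> \<in> tvs_dual (Cp X) \<Longrightarrow> \<phi> zero_fun = 0"
  using dual_scale[of \<phi> X zero_fun 0] Cp_set_zero[of X] unfolding fscale_def zero_fun_def by simp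

lemma dual_sum: assumes phi: "\<phi> \<in> tvs_dual (Cp X)" shows "finite I \<Longrightarrow> (\<And>i. i \<in> I \<Longrightarrow> h i \<in> Cp_set X) \<Longrightarrow>
   \<phi> (\<lambda>x. \<Sum>i\<in>I. c i * h i x) = (\<Sum>i\<in>I. c i * \<phi> (h i))"
proof (induction I rule: finite_induct)
  case empty then show ?case using dual_zero_app[OF phi] unfolding zero_fun_def by simp
next
  case (insert i I)
  have hi: "h i \<in> Cp_set X" and hI: "\<And>j. j \<in> I \<Longrightarrow> h j \<in> Cp_set X" using insert.prems by auto
  have "\<phi> (\<lambda>x. 1 * (c i * h i x) + 1 * (\<Sum>i\<in>I. c i * h i x)) = 1 * \<phi> (\<lambda>x. c i * h i x) + 1 * \<phi> (\<lambda>x. \<Sum>i\<in>I. c i * h i x)"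
    by (rule dual_lin_app[OF phi Cp_set_scale'[OF hi] Cp_set_sum[OF insert.hyps(1) hI]])
  moreover have "\<phi> (\<lambda>x. c i * h i x) = c i * \<phi> (h i)"
    using dual_scale[OF phi hi, of "c i"] unfolding fscale_def by simp
  moreover have "(\<lambda>x. \<Sum>i\<in>insert i I. c i * h i x) = (\<lambda>x. 1 * (c i * h i x) + 1 * (\<Sum>i\<in>I. c i * h i x))"
    using insert.hyps by simp
  moreover have "(\<Sum>i\<in>insert i I. c i * \<phi> (h i)) = c i * \<phi> (h i) + (\<Sum>i\<in>I. c i * \<phi> (h i))"
    using insert.hyps by simp
  ultimately show ?case using insert.IH[OF hI] by simp
qed

lemma bump:
  fixes X :: "'a topology"
  assumes "completely_regular_space X" "closedin X C" "x \<in> topspace X" "x \<notin> C"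
  shows "\<exists>f\<in>Cp_set X. f x = 1 \<and> (\<forall>z. 0 \<le> f z \<and> f z \<le> 1) \<and> (\<forall>z\<in>C. f z = 0)"
proof -
  obtain g :: "'a \<Rightarrow> real" where g: "continuous_map X (top_of_set {0..1::real}) g" "g x = 0" "g ` C \<subseteq> {1}"
    using assms unfolding completely_regular_space_def by blast
  have gg: "continuous_map X euclideanreal g \<and> g ` topspace X \<subseteq> {0..1::real}"
    using g(1) by (auto simp: continuous_map_in_subtopology)
  then have gc: "continuous_map X euclideanreal g" and gr: "\<And>z. z \<in> topspace X \<Longrightarrow> g z \<in> {0..1}"
    by auto
  define f where "f z = (if z \<in> topspace X then 1 - g z else 0)" for z
  have "continuous_map X euclideanreal (\<lambda>z. 1 - g z)" using gc by (intro continuous_intros) auto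
  then have "continuous_map X euclideanreal f" by (rule continuous_map_eq) (simp add: f_def)
  moreover have "\<forall>z. z \<notin> topspace X \<longrightarrow> f z = 0" by (simp add: f_def)
  ultimately have "f \<in> Cp_set X" unfolding Cp_set_def by blast
  moreover have "C \<subseteq> topspace X" using assms(2) closedin_subset by auto
  moreover have "f x = 1" using g assms(3) unfolding f_def by simp
  moreover have "\<forall>z. 0 \<le> f z \<and> f z \<le> 1"
  proof
    fix z show "0 \<le> f z \<and> f z \<le> 1"
      using gr[of z] by (cases "z \<in> topspace X") (auto simp: f_def)
  qed
  moreover have "\<forall>z\<in>C. f z = 0" using g \<open>C \<subseteq> topspace X\<close> unfolding f_def by auto
  ultimately show ?thesis by blast
qed

lemma finite_closed:
  assumes "Hausdorff_space X" "finite F" "F \<subseteq> topspace X"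
  shows "closedin X F"
proof -
  have "t1_space X" using assms(1) by (simp add: Hausdorff_imp_t1_space)
  show ?thesis using assms(2,3)
  proof (induction F rule: finite_induct)
    case (insert a F)
    have "closedin X {a}" using \<open>t1_space X\<close> insert.prems by (simp add: t1_space_closedin_singleton)
    then have "closedin X ({a} \<union> F)" using insert by (intro closedin_Un) auto
    then show ?case by simp
  qed simp
qed



lemma Cp_open_basis:
  assumes "openin (Cp X) U" "zero_fun \<in> U"
  obtains Y where "\<And>i. open (Y i)" "\<And>i. (0::real) \<in> Y i" "finite {i. Y i \<noteq> UNIV}"
    "\<And>g. g \<in> Cp_set X \<Longrightarrow> (\<And>i. g i \<in> Y i) \<Longrightarrow> g \<in> U"
proof -
  obtain W where W: "openin (product_topology (\<lambda>_. euclideanreal) UNIV) W" "U = W \<inter> Cp_set X"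
    using assms(1) unfolding Cp_def openin_subtopology by blast
  have "zero_fun \<in> W" using assms(2) W by auto
  from product_topology_open_contains_basis[OF W(1) this] obtain Y where
    Y: "zero_fun \<in> (\<Pi>\<^sub>E i\<in>UNIV. Y i)" "\<And>i. openin euclideanreal (Y i)"
       "finite {i. Y i \<noteq> topspace euclideanreal}" "(\<Pi>\<^sub>E i\<in>UNIV. Y i) \<subseteq> W"
    by blast
  show ?thesis
  proof (rule that[of Y])
    fix i show "open (Y i)" using Y(2)[of i] by simp
    show "(0::real) \<in> Y i" using Y(1) unfolding zero_fun_def by auto
  next
    show "finite {i. Y i \<noteq> UNIV}" using Y(3) by simp
  next
    fix g assume g: "g \<in> Cp_set X" "\<And>i. g i \<in> Y i"
    then have "g \<in> (\<Pi>\<^sub>E i\<in>UNIV. Y i)" by auto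
    then show "g \<in> U" using Y(4) W g by auto
  qed
qed

lemma repr:
  fixes X :: "'a topology"
  assumes tych: "tychonoff_space X" and phi: "\<phi> \<in> tvs_dual (Cp X)"
  shows "\<exists>F a. finite F \<and> F \<subseteq> topspace X \<and> (\<forall>f\<in>Cp_set X. \<phi> f = (\<Sum>y\<in>F. a y * f y))"
proof -
  have H: "Hausdorff_space X" and CR: "completely_regular_space X"
    using tych unfolding tychonoff_space_def by auto
  define S where "S = {f \<in> topspace (Cp X). \<phi> f \<in> {-1<..<1}}"
  have oS: "openin (Cp X) S" unfolding S_def
    by (rule openin_continuous_map_preimage[OF dual_cont[OF phi]]) simp
  have zS: "zero_fun \<in> S" unfolding S_def using Cp_set_zero dual_zero_app[OF phi] by auto
  obtain Y where Y: "\<And>i. open (Y i)" "\<And>i. (0::real) \<in> Y i" "finite {i. Y i \<noteq> UNIV}"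
    "\<And>g. g \<in> Cp_set X \<Longrightarrow> (\<And>i. g i \<in> Y i) \<Longrightarrow> g \<in> S"
    using Cp_open_basis[OF oS zS] by blast
  define F where "F = {i. Y i \<noteq> UNIV} \<inter> topspace X"
  have fF: "finite F" and FX: "F \<subseteq> topspace X" using Y(3) unfolding F_def by auto
  have key: "\<phi> f = 0" if f: "f \<in> Cp_set X" "\<And>i. i \<in> F \<Longrightarrow> f i = 0" for f
  proof (rule ccontr)
    assume ne: "\<phi> f \<noteq> 0"
    define t where "t = 2 / \<phi> f"
    have "fscale t f \<in> S"
    proof (rule Y(4))
      show "fscale t f \<in> Cp_set X" by (rule Cp_set_scale[OF f(1)])
      fix i show "fscale t f i \<in> Y i"
      proof (cases "Y i = UNIV")
        case False
        then have "f i = 0"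
          using f Cp_setD(2)[OF f(1)] unfolding F_def by (cases "i \<in> topspace X") auto
        then show ?thesis using Y(2) unfolding fscale_def by simp
      qed simp
    qed
    then have "\<bar>t * \<phi> f\<bar> < 1" unfolding S_def using dual_scale[OF phi f(1)] by auto
    then show False using ne unfolding t_def by simp
  qed
  have "\<exists>e. e \<in> Cp_set X \<and> e y = 1 \<and> (\<forall>z\<in>F - {y}. e z = 0)" if "y \<in> F" for y
  proof -
    have "closedin X (F - {y})" using finite_closed[OF H] fF FX by auto
    then show ?thesis using bump[OF CR, of "F - {y}" y] that FX by auto
  qed
  then obtain e where e: "\<And>y. y \<in> F \<Longrightarrow> e y \<in> Cp_set X" "\<And>y. y \<in> F \<Longrightarrow> e y y = 1"
    "\<And>y z. y \<in> F \<Longrightarrow> z \<in> F - {y} \<Longrightarrow> e y z = 0"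
    by metis
  show ?thesis
  proof (intro exI conjI ballI)
    fix f assume f: "f \<in> Cp_set X"
    define s where "s = (\<lambda>x. \<Sum>y\<in>F. f y * e y x)"
    have sC: "s \<in> Cp_set X" unfolding s_def using Cp_set_sum[OF fF e(1)] .
    define g where "g = (\<lambda>x. 1 * f x + (-1) * s x)"
    have gC: "g \<in> Cp_set X" unfolding g_def using Cp_set_lin[OF f sC] .
    have "g i = 0" if i: "i \<in> F" for i
    proof -
      have "s i = f i * e i i + (\<Sum>y\<in>F - {i}. f y * e y i)"
        unfolding s_def using sum.remove[OF fF i] .
      also have "(\<Sum>y\<in>F - {i}. f y * e y i) = 0"
        using e(3) i by (intro sum.neutral) auto
      finally show ?thesis unfolding g_def using e(2)[OF i] by simp
    qed
    then have "\<phi> g = 0" using key gC by blast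
    moreover have "\<phi> g = 1 * \<phi> f + (-1) * \<phi> s"
      unfolding g_def by (rule dual_lin_app[OF phi f sC])
    moreover have "\<phi> s = (\<Sum>y\<in>F. f y * \<phi> (e y))"
      unfolding s_def by (rule dual_sum[OF phi fF e(1)])
    ultimately show "\<phi> f = (\<Sum>y\<in>F. \<phi> (e y) * f y)" by (simp add: mult.commute)
  qed (use fF FX in auto)
qed

lemma bounded_pointwise:
  assumes "tvs_bounded (Cp X) B"
  shows "\<exists>M. \<forall>f\<in>B. \<bar>f x\<bar> \<le> M"
proof -
  define U where "U = {f \<in> topspace (Cp X). f x \<in> {-1<..<1::real}}"
  have "openin (Cp X) U" unfolding U_def
    by (rule openin_continuous_map_preimage[OF eval_cont]) simp
  moreover have "zero_fun \<in> U" unfolding U_def using Cp_set_zero by (auto simp: zero_fun_def)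
  ultimately obtain t where t: "t > 0" "B \<subseteq> fscale t ` U"
    using assms unfolding tvs_bounded_def by blast
  have "\<bar>f x\<bar> \<le> t" if fB: "f \<in> B" for f
  proof -
    obtain g where "g \<in> U" "f = fscale t g" using t fB by blast
    then show ?thesis using t(1) unfolding U_def fscale_def by (auto simp: abs_mult)
  qed
  then show ?thesis by blast
qed

lemma small_eps:
  fixes Y :: "'i \<Rightarrow> real set"
  shows "finite I \<Longrightarrow> (\<And>i. i \<in> I \<Longrightarrow> open (Y i) \<and> 0 \<in> Y i) \<Longrightarrow> \<exists>e>0. \<forall>i\<in>I. \<forall>r. \<bar>r\<bar> < e \<longrightarrow> r \<in> Y i"
proof (induction I rule: finite_induct)
  case empty then show ?case by (intro exI[of _ 1]) auto
next
  case (insert j I)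
  obtain e1 where e1: "e1 > 0" "\<forall>i\<in>I. \<forall>r. \<bar>r\<bar> < e1 \<longrightarrow> r \<in> Y i" using insert by auto
  have "open (Y j)" "0 \<in> Y j" using insert.prems by auto
  then obtain e2 where e2: "e2 > 0" "\<forall>y. dist y 0 < e2 \<longrightarrow> y \<in> Y j"
    unfolding open_dist by blast
  show ?case
    by (rule exI[of _ "min e1 e2"]) (use e1 e2 in \<open>auto simp: dist_real_def\<close>)
qed

lemma pointwise_bounded:
  assumes B: "B \<subseteq> Cp_set X" and pb: "\<And>x. \<exists>M. \<forall>f\<in>B. \<bar>f x\<bar> \<le> M"
  shows "tvs_bounded (Cp X) B"
  unfolding tvs_bounded_def
proof (intro conjI allI impI)
  show "B \<subseteq> topspace (Cp X)" using B by simp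
  fix U assume U: "openin (Cp X) U \<and> zero_fun \<in> U"
  obtain Y where Y: "\<And>i. open (Y i)" "\<And>i. (0::real) \<in> Y i" "finite {i. Y i \<noteq> UNIV}"
    "\<And>g. g \<in> Cp_set X \<Longrightarrow> (\<And>i. g i \<in> Y i) \<Longrightarrow> g \<in> U"
    using Cp_open_basis[of X U] U by blast
  define I where "I = {i. Y i \<noteq> UNIV}"
  obtain e where e: "e > 0" "\<forall>i\<in>I. \<forall>r. \<bar>r\<bar> < e \<longrightarrow> r \<in> Y i"
    using small_eps[of I Y] Y unfolding I_def by blast
  define M where "M i = (SOME M. \<forall>f\<in>B. \<bar>f i\<bar> \<le> M)" for i
  have M: "\<forall>f\<in>B. \<bar>f i\<bar> \<le> M i" for i unfolding M_def by (rule someI_ex, rule pb)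
  define K where "K = 1 + (\<Sum>i\<in>I. \<bar>M i\<bar>)"
  have K: "\<bar>M i\<bar> \<le> K" if "i \<in> I" for i
  proof -
    have "\<bar>M i\<bar> \<le> (\<Sum>i\<in>I. \<bar>M i\<bar>)"
      using Y(3) that unfolding I_def by (intro member_le_sum) auto
    then show ?thesis unfolding K_def by simp
  qed
  have Kpos: "K > 0" unfolding K_def by (simp add: add_pos_nonneg sum_nonneg)
  define t where "t = 2 * K / e"
  have tpos: "t > 0" unfolding t_def using Kpos e by simp
  show "\<exists>t>0. B \<subseteq> fscale t ` U"
  proof (intro exI[of _ t] conjI subsetI)
    fix f assume f: "f \<in> B"
    define g where "g = fscale (1/t) f"
    have "g \<in> U"
    proof (rule Y(4))
      show "g \<in> Cp_set X" unfolding g_def using f B Cp_set_scale by blast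
      fix i show "g i \<in> Y i"
      proof (cases "i \<in> I")
        case True
        have "\<bar>f i\<bar> \<le> K" using M[of i] f K[OF True] by fastforce
        then have "\<bar>f i\<bar> / t \<le> K / t" using tpos by (simp add: divide_right_mono)
        also have "K / t = e / 2" unfolding t_def using Kpos e by simp
        finally have "\<bar>f i\<bar> / t < e" using e by linarith
        then have "\<bar>g i\<bar> < e" unfolding g_def fscale_def using tpos by (simp add: abs_mult)
        then show ?thesis using e(2) True by blast
      next
        case False then show ?thesis unfolding I_def by simp
      qed
    qed
    moreover have "f = fscale t g" unfolding g_def fscale_def using tpos by auto
    ultimately show "f \<in> fscale t ` U" by blast
  qed (rule tpos)
qed

lemma dual_bdd:
  assumes tych: "tychonoff_space X" and psi: "\<psi> \<in> tvs_dual (Cp X)" and B: "tvs_bounded (Cp X) B"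
  shows "\<exists>M. \<forall>f\<in>B. \<bar>\<psi> f\<bar> \<le> M"
proof -
  obtain F a where Fa: "finite F" "\<forall>f\<in>Cp_set X. \<psi> f = (\<Sum>y\<in>F. a y * f y)"
    using repr[OF tych psi] by blast
  define M where "M i = (SOME M. \<forall>f\<in>B. \<bar>f i\<bar> \<le> M)" for i
  have M: "\<forall>f\<in>B. \<bar>f i\<bar> \<le> M i" for i unfolding M_def by (rule someI_ex, rule bounded_pointwise[OF B])
  have BC: "B \<subseteq> Cp_set X" using B unfolding tvs_bounded_def by simp
  have "\<bar>\<psi> f\<bar> \<le> (\<Sum>y\<in>F. \<bar>a y\<bar> * M y)" if f: "f \<in> B" for f
  proof -
    have "\<bar>\<psi> f\<bar> = \<bar>\<Sum>y\<in>F. a y * f y\<bar>" using Fa BC f by auto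
    also have "\<dots> \<le> (\<Sum>y\<in>F. \<bar>a y * f y\<bar>)" by (rule sum_abs)
    also have "\<dots> \<le> (\<Sum>y\<in>F. \<bar>a y\<bar> * M y)"
      using M f by (intro sum_mono) (auto simp: abs_mult intro: mult_left_mono)
    finally show ?thesis .
  qed
  then show ?thesis by blast
qed



lemma diff_bdd:
  assumes tych: "tychonoff_space X" and "\<psi> \<in> tvs_dual (Cp X)" "\<mu> \<in> tvs_dual (Cp X)"
    and B: "tvs_bounded (Cp X) B"
  shows "bdd_above ((\<lambda>f. \<bar>\<psi> f - \<mu> f\<bar>) ` B)"
proof -
  have "(\<lambda>f. 1 * \<psi> f + (-1) * \<mu> f) \<in> tvs_dual (Cp X)" using dual_lin assms by blast
  from dual_bdd[OF tych this B] obtain M where "\<forall>f\<in>B. \<bar>1 * \<psi> f + (-1) * \<mu> f\<bar> \<le> M" by blast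
  then show ?thesis unfolding bdd_above_def by (intro exI[of _ M]) auto
qed

lemma bounded_Un:
  assumes "tvs_bounded (Cp X) B1" "tvs_bounded (Cp X) B2"
  shows "tvs_bounded (Cp X) (B1 \<union> B2)"
proof (rule pointwise_bounded)
  show "B1 \<union> B2 \<subseteq> Cp_set X" using assms unfolding tvs_bounded_def by auto
  fix x
  obtain M1 where "\<forall>f\<in>B1. \<bar>f x\<bar> \<le> M1" using bounded_pointwise[OF assms(1)] by blast
  moreover obtain M2 where "\<forall>f\<in>B2. \<bar>f x\<bar> \<le> M2" using bounded_pointwise[OF assms(2)] by blast
  ultimately show "\<exists>M. \<forall>f\<in>B1 \<union> B2. \<bar>f x\<bar> \<le> M" by (intro exI[of _ "max M1 M2"]) fastforce
qed

lemma bounded_zero: "tvs_bounded (Cp X) {zero_fun}"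
proof (rule pointwise_bounded)
  show "{zero_fun} \<subseteq> Cp_set X" using Cp_set_zero by blast
qed (auto simp: zero_fun_def)

definition SD :: "('b \<Rightarrow> real) topology \<Rightarrow> (('b \<Rightarrow> real) \<Rightarrow> real) set set" where
  "SD T = {{\<psi> \<in> tvs_dual T. (SUP f\<in>B. \<bar>\<psi> f - \<phi> f\<bar>) < \<epsilon>} | \<phi> B \<epsilon>.
        \<phi> \<in> tvs_dual T \<and> tvs_bounded T B \<and> B \<noteq> {} \<and> \<epsilon> > 0}
     \<union> {tvs_dual T}"

lemma SD_eq: "strong_dual_topology T = topology_generated_by (SD T)"
  unfolding strong_dual_topology_def SD_def ..

lemma topspace_SD: "topspace (strong_dual_topology T) = tvs_dual T"
  unfolding SD_eq topology_generated_by_topspace SD_def by auto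

lemma SD_basic_open:
  assumes "\<phi> \<in> tvs_dual T" "tvs_bounded T B" "B \<noteq> {}" "\<epsilon> > 0"
  shows "openin (strong_dual_topology T) {\<psi> \<in> tvs_dual T. (SUP f\<in>B. \<bar>\<psi> f - \<phi> f\<bar>) < \<epsilon>}"
  unfolding SD_eq by (rule topology_generated_by_Basis) (use assms in \<open>auto simp: SD_def\<close>)

lemma strong_nbhd_aux:
  fixes X :: "'a topology"
  assumes tych: "tychonoff_space X"
  shows "generate_topology_on (SD (Cp X)) G \<Longrightarrow> \<forall>\<mu>\<in>G \<inter> tvs_dual (Cp X). \<exists>B \<eta>. tvs_bounded (Cp X) B \<and> B \<noteq> {} \<and> \<eta> > 0 \<and>
       {\<psi> \<in> tvs_dual (Cp X). (SUP f\<in>B. \<bar>\<psi> f - \<mu> f\<bar>) < \<eta>} \<subseteq> G"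
proof (induction rule: generate_topology_on.induct)
  case Empty then show ?case by simp
next
  case (Int a b)
  show ?case
  proof
    fix \<mu> assume \<mu>: "\<mu> \<in> a \<inter> b \<inter> tvs_dual (Cp X)"
    obtain B1 \<eta>1 where 1: "tvs_bounded (Cp X) B1" "B1 \<noteq> {}" "\<eta>1 > 0"
      "{\<psi> \<in> tvs_dual (Cp X). (SUP f\<in>B1. \<bar>\<psi> f - \<mu> f\<bar>) < \<eta>1} \<subseteq> a" using Int.IH(1) \<mu> by blast
    obtain B2 \<eta>2 where 2: "tvs_bounded (Cp X) B2" "B2 \<noteq> {}" "\<eta>2 > 0"
      "{\<psi> \<in> tvs_dual (Cp X). (SUP f\<in>B2. \<bar>\<psi> f - \<mu> f\<bar>) < \<eta>2} \<subseteq> b" using Int.IH(2) \<mu> by blast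
    have B: "tvs_bounded (Cp X) (B1 \<union> B2)" using bounded_Un 1 2 by blast
    show "\<exists>B \<eta>. tvs_bounded (Cp X) B \<and> B \<noteq> {} \<and> \<eta> > 0 \<and>
       {\<psi> \<in> tvs_dual (Cp X). (SUP f\<in>B. \<bar>\<psi> f - \<mu> f\<bar>) < \<eta>} \<subseteq> a \<inter> b"
    proof (intro exI[of _ "B1 \<union> B2"] exI[of _ "min \<eta>1 \<eta>2"] conjI subsetI)
      show "tvs_bounded (Cp X) (B1 \<union> B2)" by fact
      show "B1 \<union> B2 \<noteq> {}" using 1 by simp
      show "min \<eta>1 \<eta>2 > 0" using 1 2 by simp
      fix \<psi> assume \<psi>: "\<psi> \<in> {\<psi> \<in> tvs_dual (Cp X). (SUP f\<in>B1 \<union> B2. \<bar>\<psi> f - \<mu> f\<bar>) < min \<eta>1 \<eta>2}"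
      have pm: "\<psi> \<in> tvs_dual (Cp X)" "\<mu> \<in> tvs_dual (Cp X)" using \<psi> \<mu> by auto
      have bd: "bdd_above ((\<lambda>f. \<bar>\<psi> f - \<mu> f\<bar>) ` (B1 \<union> B2))"
        by (rule diff_bdd[OF tych pm B])
      have "(SUP f\<in>B1. \<bar>\<psi> f - \<mu> f\<bar>) \<le> (SUP f\<in>B1 \<union> B2. \<bar>\<psi> f - \<mu> f\<bar>)"
        by (rule cSUP_subset_mono) (use 1 bd in auto)
      then have "\<psi> \<in> a" using 1(4) \<psi> by auto
      moreover have "(SUP f\<in>B2. \<bar>\<psi> f - \<mu> f\<bar>) \<le> (SUP f\<in>B1 \<union> B2. \<bar>\<psi> f - \<mu> f\<bar>)"
        by (rule cSUP_subset_mono) (use 2 bd in auto)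
      then have "\<psi> \<in> b" using 2(4) \<psi> by auto
      ultimately show "\<psi> \<in> a \<inter> b" by simp
    qed
  qed
next
  case (UN K)
  show ?case
  proof
    fix \<mu> assume "\<mu> \<in> \<Union>K \<inter> tvs_dual (Cp X)"
    then obtain k where k: "k \<in> K" "\<mu> \<in> k \<inter> tvs_dual (Cp X)" by auto
    obtain B \<eta> where "tvs_bounded (Cp X) B" "B \<noteq> {}" "\<eta> > 0"
      "{\<psi> \<in> tvs_dual (Cp X). (SUP f\<in>B. \<bar>\<psi> f - \<mu> f\<bar>) < \<eta>} \<subseteq> k"
      using UN.IH[OF k(1)] k(2) by blast
    moreover have "k \<subseteq> \<Union>K" using k(1) by blast
    ultimately show "\<exists>B \<eta>. tvs_bounded (Cp X) B \<and> B \<noteq> {} \<and> \<eta> > 0 \<and>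
       {\<psi> \<in> tvs_dual (Cp X). (SUP f\<in>B. \<bar>\<psi> f - \<mu> f\<bar>) < \<eta>} \<subseteq> \<Union>K"
      by blast
  qed
next
  case (Basis s)
  show ?case
  proof
    fix \<mu> assume \<mu>: "\<mu> \<in> s \<inter> tvs_dual (Cp X)"
    show "\<exists>B \<eta>. tvs_bounded (Cp X) B \<and> B \<noteq> {} \<and> \<eta> > 0 \<and>
       {\<psi> \<in> tvs_dual (Cp X). (SUP f\<in>B. \<bar>\<psi> f - \<mu> f\<bar>) < \<eta>} \<subseteq> s"
    proof (cases "s = tvs_dual (Cp X)")
      case True
      then show ?thesis using bounded_zero by (intro exI[of _ "{zero_fun}"] exI[of _ 1]) auto
    next
      case False
      then obtain \<phi> B \<epsilon> where s: "s = {\<psi> \<in> tvs_dual (Cp X). (SUP f\<in>B. \<bar>\<psi> f - \<phi> f\<bar>) < \<epsilon>}"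
        "\<phi> \<in> tvs_dual (Cp X)" "tvs_bounded (Cp X) B" "B \<noteq> {}" "\<epsilon> > 0"
        using Basis.hyps unfolding SD_def by blast
      define d where "d = (SUP f\<in>B. \<bar>\<mu> f - \<phi> f\<bar>)"
      have d: "d < \<epsilon>" using \<mu> s unfolding d_def by auto
      have md: "\<mu> \<in> tvs_dual (Cp X)" using \<mu> by simp
      have bdm: "bdd_above ((\<lambda>f. \<bar>\<mu> f - \<phi> f\<bar>) ` B)" by (rule diff_bdd[OF tych md s(2) s(3)])
      show ?thesis
      proof (intro exI[of _ B] exI[of _ "\<epsilon> - d"] conjI subsetI)
        show "tvs_bounded (Cp X) B" "B \<noteq> {}" "\<epsilon> - d > 0" using s d by auto
        fix \<psi> assume \<psi>: "\<psi> \<in> {\<psi> \<in> tvs_dual (Cp X). (SUP f\<in>B. \<bar>\<psi> f - \<mu> f\<bar>) < \<epsilon> - d}"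
        have pd: "\<psi> \<in> tvs_dual (Cp X)" using \<psi> by simp
        have bdp: "bdd_above ((\<lambda>f. \<bar>\<psi> f - \<mu> f\<bar>) ` B)" by (rule diff_bdd[OF tych pd md s(3)])
        have "(SUP f\<in>B. \<bar>\<psi> f - \<phi> f\<bar>) \<le> (SUP f\<in>B. \<bar>\<psi> f - \<mu> f\<bar>) + d"
        proof (rule cSUP_least[OF s(4)])
          fix f assume f: "f \<in> B"
          have "\<bar>\<psi> f - \<mu> f\<bar> \<le> (SUP f\<in>B. \<bar>\<psi> f - \<mu> f\<bar>)" by (rule cSUP_upper[OF f bdp])
          moreover have "\<bar>\<mu> f - \<phi> f\<bar> \<le> d" unfolding d_def by (rule cSUP_upper[OF f bdm])
          ultimately show "\<bar>\<psi> f - \<phi> f\<bar> \<le> (SUP f\<in>B. \<bar>\<psi> f - \<mu> f\<bar>) + d" by linarith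
        qed
        then show "\<psi> \<in> s" using \<psi> s(1) by auto
      qed
    qed
  qed
qed

lemma strong_nbhd:
  fixes X :: "'a topology"
  assumes tych: "tychonoff_space X" and G: "openin (strong_dual_topology (Cp X)) G" and \<mu>: "\<mu> \<in> G"
  shows "\<exists>B \<eta>. tvs_bounded (Cp X) B \<and> B \<noteq> {} \<and> \<eta> > 0 \<and>
       {\<psi> \<in> tvs_dual (Cp X). (SUP f\<in>B. \<bar>\<psi> f - \<mu> f\<bar>) < \<eta>} \<subseteq> G"
proof -
  have "\<mu> \<in> tvs_dual (Cp X)" using openin_subset[OF G] \<mu> topspace_SD by blast
  moreover have "generate_topology_on (SD (Cp X)) G"
    using G unfolding SD_eq by (rule openin_topology_generated_by)
  ultimately show ?thesis using strong_nbhd_aux[OF tych] \<mu> by blast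
qed



lemma local_eval:
  assumes "finite F" "\<forall>y\<in>F - {x}. f y = 0"
  shows "(\<Sum>y\<in>F. a y * f y) = (if x \<in> F then a x else 0) * (f x :: real)"
proof (cases "x \<in> F")
  case True
  have "(\<Sum>y\<in>F. a y * f y) = a x * f x + (\<Sum>y\<in>F - {x}. a y * f y)"
    using sum.remove[OF assms(1) True] .
  also have "(\<Sum>y\<in>F - {x}. a y * f y) = 0" using assms(2) by (intro sum.neutral) auto
  finally show ?thesis using True by simp
next
  case False
  then show ?thesis using assms(2) by (simp add: sum.neutral)
qed

lemma hull:
  fixes A :: "('c \<Rightarrow> real) set"
  assumes conv: "\<forall>f\<in>A. \<forall>g\<in>A. \<forall>t. 0 \<le> t \<and> t \<le> 1 \<longrightarrow> (\<lambda>x. t * f x + (1 - t) * g x) \<in> A"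
    and bal: "\<forall>f\<in>A. \<forall>c. \<bar>c\<bar> \<le> 1 \<longrightarrow> fscale c f \<in> A"
    and z: "(\<lambda>x. 0) \<in> A"
  shows "finite F \<Longrightarrow> (\<forall>y\<in>F. e y \<in> A) \<Longrightarrow> (\<Sum>y\<in>F. \<bar>l y\<bar>) \<le> 1 \<Longrightarrow> (\<lambda>x. \<Sum>y\<in>F. l y * e y x) \<in> A"
proof (induction F arbitrary: l rule: finite_induct)
  case empty then show ?case using z by simp
next
  case (insert y F)
  define s where "s = (\<Sum>i\<in>F. \<bar>l i\<bar>)"
  define u where "u = \<bar>l y\<bar>"
  have us: "u + s \<le> 1" using insert unfolding u_def s_def by simp
  have s0: "s \<ge> 0" unfolding s_def by (simp add: sum_nonneg)
  have eyA: "e y \<in> A" using insert.prems by simp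
  have eFA: "\<forall>i\<in>F. e i \<in> A" using insert.prems by simp
  show ?case
  proof (cases "s = 0")
    case True
    then have "\<forall>i\<in>F. \<bar>l i\<bar> = 0" unfolding s_def using insert.hyps(1) sum_nonneg_eq_0_iff[of F "\<lambda>i. \<bar>l i\<bar>"] by simp
    then have "(\<lambda>x. \<Sum>i\<in>insert y F. l i * e i x) = fscale (l y) (e y)"
      using insert.hyps unfolding fscale_def by (auto simp: sum.neutral)
    moreover have "\<bar>l y\<bar> \<le> 1" using us s0 unfolding u_def by simp
    ultimately show ?thesis using bal eyA by simp
  next
    case False
    then have spos: "s > 0" using s0 by simp
    define G where "G = (\<lambda>x. \<Sum>i\<in>F. (l i / s) * e i x)"
    have "(\<Sum>i\<in>F. \<bar>l i / s\<bar>) = s / s" unfolding s_def using spos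
      by (simp add: sum_divide_distrib[symmetric] s_def)
    then have "(\<Sum>i\<in>F. \<bar>l i / s\<bar>) \<le> 1" using spos by simp
    then have GA: "G \<in> A" unfolding G_def by (rule insert.IH[OF eFA, of "\<lambda>i. l i / s"])
    define E where "E = fscale (sgn (l y)) (e y)"
    have EA: "E \<in> A" unfolding E_def using bal eyA by (simp add: abs_sgn_eq)
    define t where "t = u / (u + s)"
    have t01: "0 \<le> t" "t \<le> 1" unfolding t_def u_def using spos by auto
    define C where "C = (\<lambda>x. t * E x + (1 - t) * G x)"
    have CA: "C \<in> A" unfolding C_def using conv EA GA t01 by blast
    have "fscale (u + s) C \<in> A" using bal CA us s0 unfolding u_def by simp
    moreover have "fscale (u + s) C = (\<lambda>x. \<Sum>i\<in>insert y F. l i * e i x)"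
    proof
      fix x
      have "(u + s) * t = u" unfolding t_def using spos u_def by simp
      moreover have "(u + s) * (1 - t) = s" unfolding t_def using spos u_def by (simp add: field_simps)
      moreover have "fscale (u + s) C x = ((u + s) * t) * E x + ((u + s) * (1 - t)) * G x"
        unfolding fscale_def C_def by (simp add: algebra_simps)
      ultimately have "fscale (u + s) C x = u * E x + s * G x" by simp
      also have "u * E x = l y * e y x" unfolding E_def fscale_def u_def
        by (simp add: mult.assoc[symmetric] abs_mult_sgn)
      also have "s * G x = (\<Sum>i\<in>F. l i * e i x)" unfolding G_def using spos
        by (simp add: sum_distrib_left)
      finally show "fscale (u + s) C x = (\<Sum>i\<in>insert y F. l i * e i x)" using insert.hyps by simp
    qed
    ultimately show ?thesis by simp
  qed
qed

lemma interp:
  fixes X :: "'a topology"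
  assumes tych: "tychonoff_space X" and fF: "finite F" and FX: "F \<subseteq> topspace X"
    and Ov: "\<And>y. y \<in> F \<Longrightarrow> openin X (Ov y) \<and> y \<in> Ov y"
  shows "\<exists>f\<in>Cp_set X. (\<forall>y\<in>F. f y = c y) \<and> (\<forall>z. f z = 0 \<or> (\<exists>y\<in>F. z \<in> Ov y \<and> \<bar>f z\<bar> \<le> \<bar>c y\<bar>))"
proof -
  have H: "Hausdorff_space X" and CR: "completely_regular_space X"
    using tych unfolding tychonoff_space_def by auto
  have "\<forall>y y'. \<exists>PQ. (y \<in> topspace X \<and> y' \<in> topspace X \<and> y \<noteq> y') \<longrightarrow>
      openin X (fst PQ) \<and> openin X (snd PQ) \<and> y \<in> fst PQ \<and> y' \<in> snd PQ \<and> disjnt (fst PQ) (snd PQ)"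
  proof (intro allI)
    fix y y'
    show "\<exists>PQ. (y \<in> topspace X \<and> y' \<in> topspace X \<and> y \<noteq> y') \<longrightarrow>
      openin X (fst PQ) \<and> openin X (snd PQ) \<and> y \<in> fst PQ \<and> y' \<in> snd PQ \<and> disjnt (fst PQ) (snd PQ)"
    proof (cases "y \<in> topspace X \<and> y' \<in> topspace X \<and> y \<noteq> y'")
      case True
      then obtain P Q where "openin X P" "openin X Q" "y \<in> P" "y' \<in> Q" "disjnt P Q"
        using H unfolding Hausdorff_space_def by blast
      then show ?thesis by (intro exI[of _ "(P, Q)"]) auto
    qed auto
  qed
  then obtain S where S: "\<And>y y'. y \<in> topspace X \<Longrightarrow> y' \<in> topspace X \<Longrightarrow> y \<noteq> y' \<Longrightarrow>
      openin X (fst (S y y')) \<and> openin X (snd (S y y')) \<and> y \<in> fst (S y y') \<and> y' \<in> snd (S y y')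
      \<and> disjnt (fst (S y y')) (snd (S y y'))"
    by metis
  define W where "W y = Ov y \<inter> ((\<Inter>y'\<in>F - {y}. fst (S y y') \<inter> snd (S y' y)) \<inter> topspace X)" for y
  have Wopen: "openin X (W y)" if "y \<in> F" for y
  proof -
    have "openin X ((\<Inter>y'\<in>F - {y}. fst (S y y') \<inter> snd (S y' y)) \<inter> topspace X)"
    proof (rule openin_INT)
      show "finite (F - {y})" using fF by simp
      fix y' assume "y' \<in> F - {y}"
      then show "openin X (fst (S y y') \<inter> snd (S y' y))"
        using S[of y y'] S[of y' y] FX that by (intro openin_Int) auto
    qed
    then show ?thesis unfolding W_def using Ov[OF that] by (intro openin_Int[of X "Ov y"]) auto
  qed
  have Wmem: "y \<in> W y" if "y \<in> F" for y
    unfolding W_def using Ov[OF that] S FX that by auto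
  have Wdisj: "W y \<inter> W y' = {}" if "y \<in> F" "y' \<in> F" "y \<noteq> y'" for y y'
  proof -
    have "W y \<subseteq> fst (S y y')" unfolding W_def using that by auto
    moreover have "W y' \<subseteq> snd (S y y')" unfolding W_def using that by auto
    moreover have "disjnt (fst (S y y')) (snd (S y y'))" using S[of y y'] FX that by auto
    ultimately show ?thesis unfolding disjnt_def by auto
  qed
  have "\<exists>b. b \<in> Cp_set X \<and> b y = 1 \<and> (\<forall>z. 0 \<le> b z \<and> b z \<le> 1) \<and> (\<forall>z\<in>topspace X - W y. b z = 0)"
    if "y \<in> F" for y
  proof -
    have "closedin X (topspace X - W y)" using Wopen[OF that] by (rule closedin_diff[OF closedin_topspace])
    then show ?thesis using bump[OF CR, of "topspace X - W y" y] FX that Wmem[OF that] by auto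
  qed
  then obtain b where b: "\<And>y. y \<in> F \<Longrightarrow> b y \<in> Cp_set X" "\<And>y. y \<in> F \<Longrightarrow> b y y = 1"
    "\<And>y z. y \<in> F \<Longrightarrow> 0 \<le> b y z \<and> b y z \<le> 1"
    "\<And>y z. y \<in> F \<Longrightarrow> z \<in> topspace X - W y \<Longrightarrow> b y z = 0"
    by metis
  have bout: "b y z = 0" if "y \<in> F" "z \<notin> W y" for y z
  proof (cases "z \<in> topspace X")
    case True then show ?thesis using b(4)[of y z] that by auto
  next
    case False then show ?thesis using Cp_setD(2)[OF b(1)[OF that(1)] False] by simp
  qed
  define f where "f = (\<lambda>z. \<Sum>y\<in>F. c y * b y z)"
  have fC: "f \<in> Cp_set X" unfolding f_def by (rule Cp_set_sum[OF fF b(1)])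
  have single: "f z = c y * b y z" if "y \<in> F" "z \<in> W y" for y z
  proof -
    have "\<forall>y'\<in>F - {y}. b y' z = 0"
    proof
      fix y' assume y': "y' \<in> F - {y}"
      then have "z \<notin> W y'" using Wdisj[of y y'] that by auto
      then show "b y' z = 0" using bout y' by auto
    qed
    then show ?thesis unfolding f_def using that
      local_eval[OF fF, of y "\<lambda>y'. b y' z" c] by simp
  qed
  show ?thesis
  proof (intro bexI[OF _ fC] conjI ballI allI)
    fix y assume "y \<in> F" then show "f y = c y" using single[of y y] Wmem b(2) by simp
  next
    fix z
    show "f z = 0 \<or> (\<exists>y\<in>F. z \<in> Ov y \<and> \<bar>f z\<bar> \<le> \<bar>c y\<bar>)"
    proof (cases "\<exists>y\<in>F. z \<in> W y")
      case True
      then obtain y where y: "y \<in> F" "z \<in> W y" by blast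
      have "\<bar>f z\<bar> = \<bar>c y\<bar> * \<bar>b y z\<bar>" using single[OF y] by (simp add: abs_mult)
      also have "\<dots> \<le> \<bar>c y\<bar>" using b(3)[OF y(1), of z] by (simp add: mult_left_le)
      finally show ?thesis using y unfolding W_def by auto
    next
      case False
      then have "f z = 0" unfolding f_def using bout by (simp add: sum.neutral)
      then show ?thesis by simp
    qed
  qed
qed



lemma mult_sgn_self: "(a::real) * sgn a = \<bar>a\<bar>"
  by (cases "a > 0"; cases "a = 0") (auto simp: sgn_if)

lemma part_imp_dist:
  fixes X :: "'a topology"
  assumes tych: "tychonoff_space X"
    and P2: "\<forall>\<P>. countable \<P> \<and> disjoint \<P> \<and> \<Union>\<P> = topspace X \<longrightarrow> point_finite_open_expansion X \<P>"
  shows "distinguished (Cp X)"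
  unfolding distinguished_def barrelled_def
proof (intro allI impI)
  fix A assume bar: "barrel (strong_dual_topology (Cp X)) A"
  have AL: "A \<subseteq> tvs_dual (Cp X)" using bar unfolding barrel_def topspace_SD by simp
  have conv: "\<forall>f\<in>A. \<forall>g\<in>A. \<forall>t. 0 \<le> t \<and> t \<le> 1 \<longrightarrow> (\<lambda>x. t * f x + (1 - t) * g x) \<in> A"
    and bal: "\<forall>f\<in>A. \<forall>c. \<bar>c\<bar> \<le> 1 \<longrightarrow> fscale c f \<in> A"
    and absb: "\<forall>f\<in>tvs_dual (Cp X). \<exists>r>0. \<forall>c. \<bar>c\<bar> \<ge> r \<longrightarrow> f \<in> fscale c ` A"
    using bar unfolding barrel_def topspace_SD by blast+
  have zA: "(\<lambda>x. 0) \<in> A"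
  proof -
    obtain r where "r > 0" "\<forall>c. \<bar>c\<bar> \<ge> r \<longrightarrow> zero_fun \<in> fscale c ` A" using absb zero_dual by blast
    then have "zero_fun \<in> fscale r ` A" by simp
    then obtain a where "a \<in> A" by blast
    then have "fscale 0 a \<in> A" using bal by simp
    then show ?thesis unfolding fscale_def by simp
  qed
  define r where "r x = (SOME r. r > 0 \<and> (\<forall>c. \<bar>c\<bar> \<ge> r \<longrightarrow> delta X x \<in> fscale c ` A))" for x
  have r: "r x > 0 \<and> (\<forall>c. \<bar>c\<bar> \<ge> r x \<longrightarrow> delta X x \<in> fscale c ` A)" for x
    unfolding r_def by (rule someI_ex[OF bspec[OF absb delta_dual]])
  define e where "e x = fscale (1 / r x) (delta X x)" for x
  have eA: "e x \<in> A" for x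
  proof -
    have rx: "r x > 0" using r by blast
    have "delta X x \<in> fscale (r x) ` A" using r[of x] by auto
    then obtain a where a: "a \<in> A" "delta X x = fscale (r x) a" by blast
    have "e x = a" unfolding e_def a(2) fscale_def using rx by auto
    then show ?thesis using a by simp
  qed
  define Xn where "Xn n = {x \<in> topspace X. nat \<lfloor>r x\<rfloor> = n}" for n
  have disjX: "Xn n \<inter> Xn m = {}" if "n \<noteq> m" for n m using that unfolding Xn_def by auto
  have "countable (range Xn)" by simp
  moreover have "disjoint (range Xn)"
    unfolding pairwise_def disjnt_def
  proof clarsimp
    fix n m assume "Xn n \<noteq> Xn m" then have "n \<noteq> m" by auto
    then show "Xn n \<inter> Xn m = {}" by (rule disjX)
  qed
  moreover have "\<Union>(range Xn) = topspace X" unfolding Xn_def by auto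
  ultimately have "point_finite_open_expansion X (range Xn)" using P2 by blast
  then obtain U where U: "\<forall>P\<in>range Xn. openin X (U P) \<and> P \<subseteq> U P"
     "\<forall>x\<in>topspace X. finite {P\<in>range Xn. x \<in> U P}"
    unfolding point_finite_open_expansion_def by blast
  define N where "N y = {n. Xn n \<noteq> {} \<and> y \<in> U (Xn n)}" for y
  have fN: "finite (N y)" if y: "y \<in> topspace X" for y
  proof -
    have "inj_on Xn (N y)"
    proof (rule inj_onI)
      fix a b assume ab: "a \<in> N y" "b \<in> N y" "Xn a = Xn b"
      show "a = b"
      proof (rule ccontr)
        assume "a \<noteq> b" then have "Xn a \<inter> Xn b = {}" by (rule disjX)
        then show False using ab unfolding N_def by auto
      qed
    qed
    moreover have "Xn ` N y \<subseteq> {P\<in>range Xn. y \<in> U P}" unfolding N_def by auto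
    then have "finite (Xn ` N y)" using U(2) y finite_subset by blast
    ultimately show ?thesis using finite_imageD by blast
  qed
  define Hb where "Hb y = (\<Sum>n\<in>N y. real n + 1)" for y
  have Hb0: "Hb y \<ge> 0" for y unfolding Hb_def by (simp add: sum_nonneg)
  define B where "B = {f \<in> Cp_set X. \<forall>y\<in>topspace X. \<bar>f y\<bar> \<le> Hb y}"
  have Bb: "tvs_bounded (Cp X) B"
  proof (rule pointwise_bounded)
    show "B \<subseteq> Cp_set X" unfolding B_def by auto
    fix x show "\<exists>M. \<forall>f\<in>B. \<bar>f x\<bar> \<le> M"
    proof (cases "x \<in> topspace X")
      case True then show ?thesis unfolding B_def by blast
    next
      case False then show ?thesis unfolding B_def using Cp_setD(2) by (intro exI[of _ 0]) auto
    qed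
  qed
  have "zero_fun \<in> B" unfolding B_def using Cp_set_zero[of X] Hb0 by (simp add: zero_fun_def)
  then have Bne: "B \<noteq> {}" by blast
  define Oz where "Oz = {\<psi> \<in> tvs_dual (Cp X). (SUP f\<in>B. \<bar>\<psi> f - zero_fun f\<bar>) < 1}"
  show "\<exists>U. openin (strong_dual_topology (Cp X)) U \<and> zero_fun \<in> U \<and> U \<subseteq> A"
  proof (intro exI[of _ Oz] conjI)
    show "openin (strong_dual_topology (Cp X)) Oz" unfolding Oz_def
      by (rule SD_basic_open[OF zero_dual Bb Bne]) simp
    show "zero_fun \<in> Oz" unfolding Oz_def using zero_dual Bne by simp
    show "Oz \<subseteq> A"
    proof
      fix \<psi> assume \<psi>O: "\<psi> \<in> Oz"
      then have psi: "\<psi> \<in> tvs_dual (Cp X)" unfolding Oz_def by simp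
      obtain F a where Fa: "finite F" "F \<subseteq> topspace X" "\<forall>f\<in>Cp_set X. \<psi> f = (\<Sum>y\<in>F. a y * f y)"
        using repr[OF tych psi] by blast
      define ny where "ny y = nat \<lfloor>r y\<rfloor>" for y
      have yX: "y \<in> Xn (ny y)" if "y \<in> F" for y using that Fa(2) unfolding Xn_def ny_def by auto
      define c where "c y = sgn (a y) * r y" for y
      obtain f where f: "f \<in> Cp_set X" "\<forall>y\<in>F. f y = c y"
        "\<forall>z. f z = 0 \<or> (\<exists>y\<in>F. z \<in> U (Xn (ny y)) \<and> \<bar>f z\<bar> \<le> \<bar>c y\<bar>)"
      proof -
        have Ovp: "openin X (U (Xn (ny y))) \<and> y \<in> U (Xn (ny y))" if "y \<in> F" for y
        proof -
          have "Xn (ny y) \<in> range Xn" by simp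
          then have "openin X (U (Xn (ny y)))" "Xn (ny y) \<subseteq> U (Xn (ny y))" using U(1) by auto
          then show ?thesis using yX[OF that] by auto
        qed
        show ?thesis using interp[OF tych Fa(1) Fa(2) Ovp, of c] that by blast
      qed
      have fB: "f \<in> B" unfolding B_def
      proof (intro CollectI conjI ballI)
        fix z assume z: "z \<in> topspace X"
        show "\<bar>f z\<bar> \<le> Hb z"
        proof (cases "f z = 0")
          case True then show ?thesis using Hb0 by simp
        next
          case False
          then obtain y where y: "y \<in> F" "z \<in> U (Xn (ny y))" "\<bar>f z\<bar> \<le> \<bar>c y\<bar>" using f(3) by blast
          have ry: "r y > 0" using r by blast
          have "\<bar>c y\<bar> \<le> r y" unfolding c_def using ry
            by (cases "a y > 0"; cases "a y = 0") (auto simp: sgn_if)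
          also have "r y \<le> real (ny y) + 1"
          proof -
            have "r y < of_int \<lfloor>r y\<rfloor> + 1" by linarith
            moreover have "\<lfloor>r y\<rfloor> \<ge> 0" using ry by simp
            ultimately show ?thesis unfolding ny_def by simp
          qed
          also have "real (ny y) + 1 \<le> Hb z"
          proof -
            have "ny y \<in> N z" unfolding N_def using yX[OF y(1)] y(2) by auto
            then show ?thesis unfolding Hb_def using fN[OF z] by (intro member_le_sum) auto
          qed
          finally show ?thesis using y(3) by simp
        qed
      qed (use f(1) in simp)
      have "\<psi> f = (\<Sum>y\<in>F. \<bar>a y\<bar> * r y)"
        using Fa(3) f(1,2) unfolding c_def by (simp add: mult.assoc[symmetric] mult_sgn_self)
      moreover have "\<bar>\<psi> f - zero_fun f\<bar> \<le> (SUP f\<in>B. \<bar>\<psi> f - zero_fun f\<bar>)"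
        by (rule cSUP_upper[OF fB diff_bdd[OF tych psi zero_dual Bb]])
      moreover have "(SUP f\<in>B. \<bar>\<psi> f - zero_fun f\<bar>) < 1" using \<psi>O unfolding Oz_def by simp
      ultimately have s1: "(\<Sum>y\<in>F. \<bar>a y\<bar> * r y) \<le> 1" unfolding zero_fun_def by simp
      have "(\<Sum>y\<in>F. \<bar>a y * r y\<bar>) = (\<Sum>y\<in>F. \<bar>a y\<bar> * r y)"
      proof (rule sum.cong)
        fix y have "r y > 0" using r by blast
        then show "\<bar>a y * r y\<bar> = \<bar>a y\<bar> * r y" by (simp add: abs_mult)
      qed simp
      then have sum1: "(\<Sum>y\<in>F. \<bar>a y * r y\<bar>) \<le> 1" using s1 by simp
      have "\<psi> = (\<lambda>h. \<Sum>y\<in>F. (a y * r y) * e y h)"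
      proof
        fix h show "\<psi> h = (\<Sum>y\<in>F. (a y * r y) * e y h)"
        proof (cases "h \<in> Cp_set X")
          case True
          have eq: "(a y * r y) * e y h = a y * h y" for y
          proof -
            have "r y > 0" using r by blast
            then show ?thesis using True unfolding e_def fscale_def delta_def by simp
          qed
          have "\<psi> h = (\<Sum>y\<in>F. a y * h y)" using Fa(3) True by simp
          also have "\<dots> = (\<Sum>y\<in>F. (a y * r y) * e y h)" by (rule sum.cong[OF refl eq[symmetric]])
          finally show ?thesis .
        next
          case False
          then show ?thesis using dual_out[OF psi False] unfolding e_def fscale_def delta_def by simp
        qed
      qed
      moreover have "(\<lambda>h. \<Sum>y\<in>F. (a y * r y) * e y h) \<in> A"
        using hull[OF conv bal zA Fa(1), of e "\<lambda>y. a y * r y"] eA sum1 by blast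
      ultimately show "\<psi> \<in> A" by simp
    qed
  qed
qed



lemma dual_smul: "\<phi> \<in> tvs_dual (Cp X) \<Longrightarrow> (\<lambda>f. c * \<phi> f) \<in> tvs_dual (Cp X)"
  using dual_lin[of \<phi> X \<phi> c 0] by simp

lemma loc:
  fixes X :: "'a topology"
  assumes tych: "tychonoff_space X" and fF: "finite F" and FX: "F \<subseteq> topspace X"
    and rep: "\<forall>f\<in>Cp_set X. \<mu> f = (\<Sum>y\<in>F. a y * f y)" and x: "x \<in> topspace X"
  shows "openin X (topspace X - (F - {x})) \<and> x \<in> topspace X - (F - {x}) \<and>
     (\<forall>f\<in>Cp_set X. (\<forall>z\<in>topspace X - (topspace X - (F - {x})). f z = 0) \<longrightarrow> \<mu> f = (if x \<in> F then a x else 0) * f x)"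
proof (intro conjI ballI impI)
  have H: "Hausdorff_space X" using tych unfolding tychonoff_space_def by auto
  have "closedin X (F - {x})" using finite_closed[OF H] fF FX by auto
  then show "openin X (topspace X - (F - {x}))" by (rule openin_diff[OF openin_topspace])
  show "x \<in> topspace X - (F - {x})" using x by simp
  fix f assume f: "f \<in> Cp_set X" "\<forall>z\<in>topspace X - (topspace X - (F - {x})). f z = 0"
  have "\<forall>y\<in>F - {x}. f y = 0" using f(2) FX by auto
  then show "\<mu> f = (if x \<in> F then a x else 0) * f x" using rep f(1) local_eval[OF fF, of x f a] by simp
qed

lemma dist_imp_part:
  fixes X :: "'a topology"
  assumes tych: "tychonoff_space X" and dist: "distinguished (Cp X)"
  shows "\<forall>\<P>. countable \<P> \<and> disjoint \<P> \<and> \<Union>\<P> = topspace X \<longrightarrow> point_finite_open_expansion X \<P>"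
proof (intro allI impI)
  fix \<P> :: "'a set set" assume a: "countable \<P> \<and> disjoint \<P> \<and> \<Union>\<P> = topspace X"
  have H: "Hausdorff_space X" and CR: "completely_regular_space X"
    using tych unfolding tychonoff_space_def by auto
  obtain g :: "'a set \<Rightarrow> nat" where g: "inj_on g \<P>" using a unfolding countable_def by blast
  define w where "w x = real (g (SOME P. P \<in> \<P> \<and> x \<in> P)) + 1" for x
  have wP: "w x = real (g P) + 1" if "x \<in> P" "P \<in> \<P>" for x P
  proof -
    define Q where "Q = (SOME P. P \<in> \<P> \<and> x \<in> P)"
    have "Q \<in> \<P> \<and> x \<in> Q" unfolding Q_def by (rule someI_ex) (use that in blast)
    then have "Q = P" using a that unfolding pairwise_def disjnt_def by blast
    then show ?thesis unfolding w_def Q_def by simp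
  qed
  have wpos: "w x \<ge> 1" for x unfolding w_def by simp
  define A where "A = {\<mu> \<in> tvs_dual (Cp X). \<forall>x\<in>topspace X. \<exists>V. openin X V \<and> x \<in> V \<and>
      (\<forall>f\<in>Cp_set X. (\<forall>z\<in>topspace X - V. f z = 0) \<longrightarrow> w x * \<bar>\<mu> f\<bar> \<le> \<bar>f x\<bar>)}"
  define B1 where "B1 = {f \<in> Cp_set X. \<forall>z. \<bar>f z\<bar> \<le> 1}"
  have B1b: "tvs_bounded (Cp X) B1"
    by (rule pointwise_bounded) (auto simp: B1_def)
  have zB1: "zero_fun \<in> B1" unfolding B1_def using Cp_set_zero[of X] by (simp add: zero_fun_def)
  then have B1ne: "B1 \<noteq> {}" by blast
  have barA: "barrel (strong_dual_topology (Cp X)) A"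
    unfolding barrel_def topspace_SD
  proof (intro conjI)
    show AL: "A \<subseteq> tvs_dual (Cp X)" unfolding A_def by auto
    show "closedin (strong_dual_topology (Cp X)) A"
      unfolding closedin_def topspace_SD
    proof (intro conjI)
      show "A \<subseteq> tvs_dual (Cp X)" by fact
      show "openin (strong_dual_topology (Cp X)) (tvs_dual (Cp X) - A)"
      proof (subst openin_subopen, intro ballI)
        fix \<mu> assume \<mu>: "\<mu> \<in> tvs_dual (Cp X) - A"
        then have mu: "\<mu> \<in> tvs_dual (Cp X)" by simp
        obtain x where x: "x \<in> topspace X" and nx: "\<And>V. openin X V \<Longrightarrow> x \<in> V \<Longrightarrow>
            \<exists>f\<in>Cp_set X. (\<forall>z\<in>topspace X - V. f z = 0) \<and> \<not> (w x * \<bar>\<mu> f\<bar> \<le> \<bar>f x\<bar>)"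
          using \<mu> unfolding A_def by auto
        obtain F a where Fa: "finite F" "F \<subseteq> topspace X" "\<forall>f\<in>Cp_set X. \<mu> f = (\<Sum>y\<in>F. a y * f y)"
          using repr[OF tych mu] by blast
        define a' where "a' = (if x \<in> F then a x else 0)"
        note L0 = loc[OF tych Fa x]
        obtain f0 where f0: "f0 \<in> Cp_set X" "\<forall>z\<in>topspace X - (topspace X - (F - {x})). f0 z = 0"
           "\<not> (w x * \<bar>\<mu> f0\<bar> \<le> \<bar>f0 x\<bar>)"
          using nx[of "topspace X - (F - {x})"] L0 by blast
        have "\<mu> f0 = a' * f0 x" using L0 f0 unfolding a'_def by blast
        then have "\<bar>f0 x\<bar> < w x * \<bar>a'\<bar> * \<bar>f0 x\<bar>" using f0(3) by (simp add: abs_mult mult.assoc)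
        then have fpos: "0 < \<bar>f0 x\<bar>" by (cases "f0 x = 0") auto
        have "1 * \<bar>f0 x\<bar> < (w x * \<bar>a'\<bar>) * \<bar>f0 x\<bar>" using \<open>\<bar>f0 x\<bar> < w x * \<bar>a'\<bar> * \<bar>f0 x\<bar>\<close> by simp
        then have wa: "1 < w x * \<bar>a'\<bar>" using mult_less_cancel_right_pos[OF fpos] by blast
        have wx0: "w x > 0" using wpos[of x] by simp
        define \<delta> where "\<delta> = \<bar>a'\<bar> - 1 / w x"
        have \<delta>pos: "\<delta> > 0" unfolding \<delta>_def using wa wx0 by (simp add: field_simps)
        define N where "N = {\<psi> \<in> tvs_dual (Cp X). (SUP f\<in>B1. \<bar>\<psi> f - \<mu> f\<bar>) < \<delta>}"
        show "\<exists>T. openin (strong_dual_topology (Cp X)) T \<and> \<mu> \<in> T \<and> T \<subseteq> tvs_dual (Cp X) - A"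
        proof (intro exI[of _ N] conjI)
          show "openin (strong_dual_topology (Cp X)) N" unfolding N_def
            by (rule SD_basic_open[OF mu B1b B1ne \<delta>pos])
          show "\<mu> \<in> N" unfolding N_def using mu B1ne \<delta>pos by simp
          show "N \<subseteq> tvs_dual (Cp X) - A"
          proof
            fix \<psi> assume \<psi>N: "\<psi> \<in> N"
            then have psi: "\<psi> \<in> tvs_dual (Cp X)" unfolding N_def by simp
            show "\<psi> \<in> tvs_dual (Cp X) - A"
            proof (rule ccontr)
              assume "\<psi> \<notin> tvs_dual (Cp X) - A"
              then have "\<psi> \<in> A" using psi by simp
              then obtain V where V: "openin X V" "x \<in> V"
                "\<forall>f\<in>Cp_set X. (\<forall>z\<in>topspace X - V. f z = 0) \<longrightarrow> w x * \<bar>\<psi> f\<bar> \<le> \<bar>f x\<bar>"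
                using x unfolding A_def by blast
              obtain F' b where Fb: "finite F'" "F' \<subseteq> topspace X" "\<forall>f\<in>Cp_set X. \<psi> f = (\<Sum>y\<in>F'. b y * f y)"
                using repr[OF tych psi] by blast
              define b' where "b' = (if x \<in> F' then b x else 0)"
              define C where "C = (topspace X - V) \<union> ((F \<union> F') - {x})"
              have "closedin X C" unfolding C_def
                by (intro closedin_Un closedin_diff[OF closedin_topspace V(1)] finite_closed[OF H])
                   (use Fa Fb in auto)
              moreover have "x \<notin> C" unfolding C_def using V(2) by simp
              ultimately obtain f where f: "f \<in> Cp_set X" "f x = 1" "\<forall>z. 0 \<le> f z \<and> f z \<le> 1" "\<forall>z\<in>C. f z = 0"
                using bump[OF CR _ x] by blast
              have fB: "f \<in> B1" unfolding B1_def using f by auto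
              have "\<psi> f = b'" using loc[OF tych Fb x] f unfolding b'_def C_def by auto
              moreover have "\<mu> f = a'" using L0 f unfolding a'_def C_def by auto
              moreover have "w x * \<bar>\<psi> f\<bar> \<le> 1" using V(3) f unfolding C_def by auto
              moreover have "\<bar>\<psi> f - \<mu> f\<bar> < \<delta>"
              proof -
                have "\<bar>\<psi> f - \<mu> f\<bar> \<le> (SUP f\<in>B1. \<bar>\<psi> f - \<mu> f\<bar>)"
                  by (rule cSUP_upper[OF fB diff_bdd[OF tych psi mu B1b]])
                then show ?thesis using \<psi>N unfolding N_def by simp
              qed
              ultimately have "w x * \<bar>b'\<bar> \<le> 1" "\<bar>b' - a'\<bar> < \<delta>" by auto
              then have "\<bar>b'\<bar> \<le> 1 / w x" using wx0 by (simp add: field_simps)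
              then show False using \<open>\<bar>b' - a'\<bar> < \<delta>\<close> unfolding \<delta>_def by linarith
            qed
          qed
        qed
      qed
    qed
  next
    show "\<forall>f\<in>A. \<forall>g\<in>A. \<forall>t. 0 \<le> t \<and> t \<le> 1 \<longrightarrow> (\<lambda>x. t * f x + (1 - t) * g x) \<in> A"
    proof (intro ballI allI impI)
      fix \<mu> \<nu> and t :: real assume \<mu>: "\<mu> \<in> A" and \<nu>: "\<nu> \<in> A" and t: "0 \<le> t \<and> t \<le> 1"
      show "(\<lambda>f. t * \<mu> f + (1 - t) * \<nu> f) \<in> A"
        unfolding A_def
      proof (intro CollectI conjI ballI)
        show "(\<lambda>f. t * \<mu> f + (1 - t) * \<nu> f) \<in> tvs_dual (Cp X)"
          using \<mu> \<nu> unfolding A_def by (intro dual_lin) auto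
        fix x assume x: "x \<in> topspace X"
        obtain V1 where V1: "openin X V1" "x \<in> V1"
           "\<forall>f\<in>Cp_set X. (\<forall>z\<in>topspace X - V1. f z = 0) \<longrightarrow> w x * \<bar>\<mu> f\<bar> \<le> \<bar>f x\<bar>"
          using \<mu> x unfolding A_def by blast
        obtain V2 where V2: "openin X V2" "x \<in> V2"
           "\<forall>f\<in>Cp_set X. (\<forall>z\<in>topspace X - V2. f z = 0) \<longrightarrow> w x * \<bar>\<nu> f\<bar> \<le> \<bar>f x\<bar>"
          using \<nu> x unfolding A_def by blast
        show "\<exists>V. openin X V \<and> x \<in> V \<and> (\<forall>f\<in>Cp_set X. (\<forall>z\<in>topspace X - V. f z = 0) \<longrightarrow>
            w x * \<bar>t * \<mu> f + (1 - t) * \<nu> f\<bar> \<le> \<bar>f x\<bar>)"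
        proof (intro exI[of _ "V1 \<inter> V2"] conjI ballI impI)
          show "openin X (V1 \<inter> V2)" using V1 V2 by auto
          show "x \<in> V1 \<inter> V2" using V1 V2 by auto
          fix f assume f: "f \<in> Cp_set X" "\<forall>z\<in>topspace X - V1 \<inter> V2. f z = 0"
          have m: "w x * \<bar>\<mu> f\<bar> \<le> \<bar>f x\<bar>" using V1(3) f by auto
          have n: "w x * \<bar>\<nu> f\<bar> \<le> \<bar>f x\<bar>" using V2(3) f by auto
          have "w x * \<bar>t * \<mu> f + (1 - t) * \<nu> f\<bar> \<le> w x * (t * \<bar>\<mu> f\<bar> + (1 - t) * \<bar>\<nu> f\<bar>)"
            using t wpos[of x] by (intro mult_left_mono) (auto intro: order_trans[OF abs_triangle_ineq] simp: abs_mult)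
          also have "\<dots> = t * (w x * \<bar>\<mu> f\<bar>) + (1 - t) * (w x * \<bar>\<nu> f\<bar>)" by (simp add: algebra_simps)
          also have "\<dots> \<le> t * \<bar>f x\<bar> + (1 - t) * \<bar>f x\<bar>"
            using t m n by (intro add_mono mult_left_mono) auto
          also have "\<dots> = \<bar>f x\<bar>" by (simp add: algebra_simps)
          finally show "w x * \<bar>t * \<mu> f + (1 - t) * \<nu> f\<bar> \<le> \<bar>f x\<bar>" .
        qed
      qed
    qed
  next
    show "\<forall>f\<in>A. \<forall>c. \<bar>c\<bar> \<le> 1 \<longrightarrow> fscale c f \<in> A"
    proof (intro ballI allI impI)
      fix \<mu> and c :: real assume \<mu>: "\<mu> \<in> A" and c: "\<bar>c\<bar> \<le> 1"
      show "fscale c \<mu> \<in> A" unfolding A_def fscale_def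
      proof (intro CollectI conjI ballI)
        show "(\<lambda>f. c * \<mu> f) \<in> tvs_dual (Cp X)" using \<mu> unfolding A_def by (intro dual_smul) auto
        fix x assume x: "x \<in> topspace X"
        obtain V where V: "openin X V" "x \<in> V"
           "\<forall>f\<in>Cp_set X. (\<forall>z\<in>topspace X - V. f z = 0) \<longrightarrow> w x * \<bar>\<mu> f\<bar> \<le> \<bar>f x\<bar>"
          using \<mu> x unfolding A_def by blast
        show "\<exists>V. openin X V \<and> x \<in> V \<and> (\<forall>f\<in>Cp_set X. (\<forall>z\<in>topspace X - V. f z = 0) \<longrightarrow>
            w x * \<bar>c * \<mu> f\<bar> \<le> \<bar>f x\<bar>)"
        proof (intro exI[of _ V] conjI ballI impI)
          fix f assume f: "f \<in> Cp_set X" "\<forall>z\<in>topspace X - V. f z = 0"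
          have m: "w x * \<bar>\<mu> f\<bar> \<le> \<bar>f x\<bar>" using V(3) f by auto
          have "w x * \<bar>c * \<mu> f\<bar> = \<bar>c\<bar> * (w x * \<bar>\<mu> f\<bar>)" by (simp add: abs_mult)
          also have "\<dots> \<le> 1 * (w x * \<bar>\<mu> f\<bar>)"
            using c wpos[of x] by (intro mult_right_mono) auto
          finally show "w x * \<bar>c * \<mu> f\<bar> \<le> \<bar>f x\<bar>" using m by simp
        qed (use V in auto)
      qed
    qed
  next
    show "\<forall>f\<in>tvs_dual (Cp X). \<exists>r>0. \<forall>c. r \<le> \<bar>c\<bar> \<longrightarrow> f \<in> fscale c ` A"
    proof
      fix \<mu> assume mu: "\<mu> \<in> tvs_dual (Cp X)"
      obtain F a where Fa: "finite F" "F \<subseteq> topspace X" "\<forall>f\<in>Cp_set X. \<mu> f = (\<Sum>y\<in>F. a y * f y)"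
        using repr[OF tych mu] by blast
      define r where "r = 1 + (\<Sum>y\<in>F. w y * \<bar>a y\<bar>)"
      have s0: "(\<Sum>y\<in>F. w y * \<bar>a y\<bar>) \<ge> 0" using wpos by (intro sum_nonneg) (simp add: order_trans[OF zero_le_one])
      have rpos: "r > 0" unfolding r_def using s0 by simp
      show "\<exists>r>0. \<forall>c. r \<le> \<bar>c\<bar> \<longrightarrow> \<mu> \<in> fscale c ` A"
      proof (intro exI[of _ r] conjI allI impI)
        fix c assume c: "r \<le> \<bar>c\<bar>"
        then have c0: "c \<noteq> 0" using rpos by auto
        define \<nu> where "\<nu> = (\<lambda>f. (1 / c) * \<mu> f)"
        have "\<nu> \<in> A" unfolding A_def
        proof (intro CollectI conjI ballI)
          show "\<nu> \<in> tvs_dual (Cp X)" unfolding \<nu>_def using mu by (rule dual_smul)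
          fix x assume x: "x \<in> topspace X"
          note L0 = loc[OF tych Fa x]
          define a' where "a' = (if x \<in> F then a x else 0)"
          have wa: "w x * \<bar>a'\<bar> \<le> \<bar>c\<bar>"
          proof (cases "x \<in> F")
            case True
            have "w x * \<bar>a x\<bar> \<le> (\<Sum>y\<in>F. w y * \<bar>a y\<bar>)"
              using Fa(1) True wpos by (intro member_le_sum) (simp_all add: order_trans[OF zero_le_one])
            then show ?thesis using True c unfolding a'_def r_def by simp
          next
            case False then show ?thesis unfolding a'_def by simp
          qed
          show "\<exists>V. openin X V \<and> x \<in> V \<and> (\<forall>f\<in>Cp_set X. (\<forall>z\<in>topspace X - V. f z = 0) \<longrightarrow> w x * \<bar>\<nu> f\<bar> \<le> \<bar>f x\<bar>)"
          proof (intro exI[of _ "topspace X - (F - {x})"] conjI ballI impI)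
            fix f assume f: "f \<in> Cp_set X" "\<forall>z\<in>topspace X - (topspace X - (F - {x})). f z = 0"
            have "\<mu> f = a' * f x" using L0 f unfolding a'_def by blast
            then have "w x * \<bar>\<nu> f\<bar> = (w x * \<bar>a'\<bar>) * \<bar>f x\<bar> / \<bar>c\<bar>" unfolding \<nu>_def by (simp add: abs_mult)
            also have "\<dots> \<le> \<bar>c\<bar> * \<bar>f x\<bar> / \<bar>c\<bar>"
              using wa by (intro divide_right_mono mult_right_mono) auto
            also have "\<dots> = \<bar>f x\<bar>" using c0 by simp
            finally show "w x * \<bar>\<nu> f\<bar> \<le> \<bar>f x\<bar>" .
          qed (use L0 in auto)
        qed
        moreover have "\<mu> = fscale c \<nu>" unfolding \<nu>_def fscale_def using c0 by auto
        ultimately show "\<mu> \<in> fscale c ` A" by blast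
      qed (rule rpos)
    qed
  qed
  then obtain U0 where U0: "openin (strong_dual_topology (Cp X)) U0" "zero_fun \<in> U0" "U0 \<subseteq> A"
    using dist unfolding distinguished_def barrelled_def by blast
  obtain B \<eta> where Bq: "tvs_bounded (Cp X) B" "B \<noteq> {}" "\<eta> > 0"
    "{\<psi> \<in> tvs_dual (Cp X). (SUP f\<in>B. \<bar>\<psi> f - zero_fun f\<bar>) < \<eta>} \<subseteq> U0"
    using strong_nbhd[OF tych U0(1,2)] by blast
  define M where "M x = (SUP f\<in>B. \<bar>f x\<bar>)" for x
  have bddM: "bdd_above ((\<lambda>f. \<bar>f x\<bar>) ` B)" for x
  proof -
    obtain K where "\<forall>f\<in>B. \<bar>f x\<bar> \<le> K" using bounded_pointwise[OF Bq(1)] by blast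
    then show ?thesis unfolding bdd_above_def by auto
  qed
  have BC: "B \<subseteq> Cp_set X" using Bq(1) unfolding tvs_bounded_def by simp
  have Mx: "w x * \<eta> / 2 \<le> M x" if x: "x \<in> topspace X" for x
  proof (rule ccontr)
    assume "\<not> w x * \<eta> / 2 \<le> M x"
    then have lt: "M x < w x * \<eta> / 2" by simp
    have wx0: "w x > 0" using wpos[of x] by simp
    define t where "t = 2 / w x"
    have t0: "t > 0" unfolding t_def using wx0 by simp
    define \<psi> where "\<psi> = (\<lambda>f. t * delta X x f)"
    have psi: "\<psi> \<in> tvs_dual (Cp X)" unfolding \<psi>_def by (rule dual_smul[OF delta_dual])
    have "(SUP f\<in>B. \<bar>\<psi> f - zero_fun f\<bar>) \<le> t * M x"
    proof (rule cSUP_least[OF Bq(2)])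
      fix f assume f: "f \<in> B"
      have "\<bar>f x\<bar> \<le> M x" unfolding M_def by (rule cSUP_upper[OF f bddM])
      then show "\<bar>\<psi> f - zero_fun f\<bar> \<le> t * M x"
        using f BC t0 unfolding \<psi>_def delta_def zero_fun_def by (auto simp: abs_mult)
    qed
    also have "t * M x < t * (w x * \<eta> / 2)" using lt t0 by simp
    also have "\<dots> = \<eta>" unfolding t_def using wx0 by simp
    finally have "\<psi> \<in> A" using Bq(4) U0(3) psi by blast
    then obtain V where V: "openin X V" "x \<in> V"
       "\<forall>f\<in>Cp_set X. (\<forall>z\<in>topspace X - V. f z = 0) \<longrightarrow> w x * \<bar>\<psi> f\<bar> \<le> \<bar>f x\<bar>"
      using x unfolding A_def by blast
    have "closedin X (topspace X - V)" by (rule closedin_diff[OF closedin_topspace V(1)])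
    then obtain f where f: "f \<in> Cp_set X" "f x = 1" "\<forall>z. 0 \<le> f z \<and> f z \<le> 1" "\<forall>z\<in>topspace X - V. f z = 0"
      using bump[OF CR _ x, of "topspace X - V"] V(2) by blast
    have "w x * \<bar>\<psi> f\<bar> \<le> 1" using V(3) f by auto
    moreover have "\<psi> f = t" unfolding \<psi>_def delta_def using f by simp
    ultimately have "w x * t \<le> 1" using t0 by simp
    then show False unfolding t_def using wx0 by simp
  qed
  define U where "U P = {z \<in> topspace X. \<exists>f\<in>B. (real (g P) + 1) * \<eta> / 4 < \<bar>f z\<bar>}" for P
  show "point_finite_open_expansion X \<P>"
    unfolding point_finite_open_expansion_def
  proof (intro exI[of _ U] conjI ballI)
    fix P assume P: "P \<in> \<P>"
    have "U P = \<Union>((\<lambda>f. {z \<in> topspace X. \<bar>f z\<bar> \<in> {(real (g P) + 1) * \<eta> / 4<..}}) ` B)"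
      unfolding U_def by auto
    moreover have "openin X {z \<in> topspace X. \<bar>f z\<bar> \<in> {(real (g P) + 1) * \<eta> / 4<..}}" if "f \<in> B" for f
    proof -
      have "continuous_map X euclideanreal (\<lambda>z. \<bar>f z\<bar>)"
        using Cp_setD(1) that BC by (intro continuous_map_real_abs) auto
      then show ?thesis by (rule openin_continuous_map_preimage) simp
    qed
    ultimately show "openin X (U P)" by (auto intro!: openin_Union)
    show "P \<subseteq> U P"
    proof
      fix x assume xP: "x \<in> P"
      have x: "x \<in> topspace X" using xP P a by auto
      have wx: "w x = real (g P) + 1" by (rule wP[OF xP P])
      have "w x * \<eta> / 4 < w x * \<eta> / 2" using wpos[of x] Bq(3) by simp
      then have "w x * \<eta> / 4 < M x" using Mx[OF x] by linarith
      then obtain f where "f \<in> B" "w x * \<eta> / 4 < \<bar>f x\<bar>"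
        unfolding M_def using less_cSUP_iff[OF Bq(2) bddM] by blast
      then show "x \<in> U P" unfolding U_def using x wx by auto
    qed
  next
    fix x assume x: "x \<in> topspace X"
    define K where "K = 4 * M x / \<eta>"
    have sub: "{P\<in>\<P>. x \<in> U P} \<subseteq> {P\<in>\<P>. g P < nat \<lceil>K\<rceil>}"
    proof
      fix P assume "P \<in> {P\<in>\<P>. x \<in> U P}"
      then obtain f where P: "P \<in> \<P>" and f: "f \<in> B" "(real (g P) + 1) * \<eta> / 4 < \<bar>f x\<bar>"
        unfolding U_def by blast
      have "\<bar>f x\<bar> \<le> M x" unfolding M_def by (rule cSUP_upper[OF f(1) bddM])
      then have "(real (g P) + 1) * \<eta> < 4 * M x" using f(2) by simp
      then have "real (g P) + 1 < K" unfolding K_def using Bq(3) by (simp add: field_simps)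
      then have "g P < nat \<lceil>K\<rceil>" by linarith
      then show "P \<in> {P\<in>\<P>. g P < nat \<lceil>K\<rceil>}" using P by simp
    qed
    have "finite {P\<in>\<P>. g P < nat \<lceil>K\<rceil>}"
    proof -
      have "g ` {P\<in>\<P>. g P < nat \<lceil>K\<rceil>} \<subseteq> {..<nat \<lceil>K\<rceil>}" by auto
      then have "finite (g ` {P\<in>\<P>. g P < nat \<lceil>K\<rceil>})" using finite_subset by blast
      moreover have "inj_on g {P\<in>\<P>. g P < nat \<lceil>K\<rceil>}" using g inj_on_subset by fastforce
      ultimately show ?thesis using finite_imageD by blast
    qed
    then show "finite {P\<in>\<P>. x \<in> U P}" using sub finite_subset by blast
  qed
qed


theorem theorem2p1:
  fixes X :: "'a topology"
  assumes "tychonoff_space X" and "infinite (topspace X)"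
  shows "(distinguished (Cp X) \<longleftrightarrow>
           (\<forall>\<P>. countable \<P> \<and> disjoint \<P> \<and> \<Union>\<P> = topspace X
                 \<longrightarrow> point_finite_open_expansion X \<P>))
       \<and> ((\<forall>\<P>. countable \<P> \<and> disjoint \<P> \<and> \<Union>\<P> = topspace X
                 \<longrightarrow> point_finite_open_expansion X \<P>) \<longleftrightarrow>
           (\<forall>\<P>. countable \<P> \<and> disjoint \<P> \<and> \<Union>\<P> \<subseteq> topspace X
                 \<longrightarrow> point_finite_open_expansion X \<P>))
       \<and> ((\<forall>\<P>. countable \<P> \<and> disjoint \<P> \<and> \<Union>\<P> \<subseteq> topspace X
                 \<longrightarrow> point_finite_open_expansion X \<P>) \<longleftrightarrow> Delta_space X)"
proof (intro conjI iffI)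
  show "distinguished (Cp X) \<Longrightarrow> \<forall>\<P>. countable \<P> \<and> disjoint \<P> \<and> \<Union>\<P> = topspace X \<longrightarrow> point_finite_open_expansion X \<P>"
    using dist_imp_part[OF assms(1)] by blast
  show "\<forall>\<P>. countable \<P> \<and> disjoint \<P> \<and> \<Union>\<P> = topspace X \<longrightarrow> point_finite_open_expansion X \<P> \<Longrightarrow> distinguished (Cp X)"
    using part_imp_dist[OF assms(1)] by blast
  show "\<forall>\<P>. countable \<P> \<and> disjoint \<P> \<and> \<Union>\<P> = topspace X \<longrightarrow> point_finite_open_expansion X \<P> \<Longrightarrow>
    \<forall>\<P>. countable \<P> \<and> disjoint \<P> \<and> \<Union>\<P> \<subseteq> topspace X \<longrightarrow> point_finite_open_expansion X \<P>"
    by (rule P23)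
  show "\<forall>\<P>. countable \<P> \<and> disjoint \<P> \<and> \<Union>\<P> \<subseteq> topspace X \<longrightarrow> point_finite_open_expansion X \<P> \<Longrightarrow>
    \<forall>\<P>. countable \<P> \<and> disjoint \<P> \<and> \<Union>\<P> = topspace X \<longrightarrow> point_finite_open_expansion X \<P>"
    by auto
  show "\<forall>\<P>. countable \<P> \<and> disjoint \<P> \<and> \<Union>\<P> \<subseteq> topspace X \<longrightarrow> point_finite_open_expansion X \<P> \<Longrightarrow> Delta_space X"
    by (rule P34)
  show "Delta_space X \<Longrightarrow> \<forall>\<P>. countable \<P> \<and> disjoint \<P> \<and> \<Union>\<P> \<subseteq> topspace X \<longrightarrow> point_finite_open_expansion X \<P>"
    by (rule P43)
qed

end
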